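(* For $n\in\mathbb{N}$ let \[ b_n:=\frac{\sum_{k=1}^n\frac1k}{2-\sum_{k=1}^n\frac1{k2^k}},\qquad \mu_n:=\frac1{2n2^n},\qquad \beta_n:=1-\sum_{k=1}^n\mu_k. \] For every $N\in\mathbb{N}$ and every $\delta>0$ there exist open sets $\Omega_{B_N},\Omega_{G_1},\dots,\Omega_{G_N}\subset[0,1]$ with \[ [0,1]=\bigcup_{k=1}^N\Omega_{G_k}\cup\Omega_{B_N}\cup\mathcal{N} \] for some set $\mathcal{N}$ of one-dimensional Hausdorff measure zero, a piecewise affine (Lipschitz) function $u:[0,1]\to\mathbb{R}$ with $u(0)=u(1)=0$ and $\|u\|_{L^\infty}\le\delta$, and a piecewise constant function $w:[0,1]\to(0,\infty)$, such that \[ |\Omega_{B_N}|=\beta_N,\qquad |\Omega_{G_k}|=\mu_k\quad(k=1,\dots,N), \] \[ w=2^{-k},\ u'=-2^k\ \text{a.e. on }\Omega_{G_k},\qquad w=1,\ u'=b_N\ \text{a.e. on }\Omega_{B_N}. \] Furthermore, if $u$ and $w$ are extended to $\mathbb{R}$ by $u\equiv0$ and $w\equiv1$ on $\mathbb{R}\setminus[0,1]$, then for every $r>2$ there is a constant $C(r)$, independent of $N$ (and $\delta$), such that for every interval $Q\subset\mathbb{R}$, \[ \left(\frac1{|Q|}\int_Q w\right)\left(\frac1{|Q|}\int_Q w^{-\frac1{r-1}}\right)^{r-1}\le C(r). \]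
   Context: $|\cdot|$ denotes one-dimensional Lebesgue measure; cubes in $\mathbb{R}$ are intervals. *)

theory Defs
  imports "HOL-Analysis.Analysis"
begin

definition b_seq :: "nat \<Rightarrow> real" where
  "b_seq n = (\<Sum>k=1..n. 1 / real k) / (2 - (\<Sum>k=1..n. 1 / (real k * 2 ^ k)))"

definition mu_seq :: "nat \<Rightarrow> real" where
  "mu_seq n = 1 / (2 * real n * 2 ^ n)"

definition beta_seq :: "nat \<Rightarrow> real" where
  "beta_seq n = 1 - (\<Sum>k=1..n. mu_seq k)"

definition piecewise_affine_on :: "real \<Rightarrow> real \<Rightarrow> (real \<Rightarrow> real) \<Rightarrow> bool" where
  "piecewise_affine_on a b f \<longleftrightarrow>
     (\<exists>S. finite S \<and> a \<in> S \<and> b \<in> S \<and> S \<subseteq> {a..b} \<and>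
        (\<forall>x\<in>S. \<forall>y\<in>S. x < y \<and> {x<..<y} \<inter> S = {} \<longrightarrow>
           (\<exists>m c. \<forall>t\<in>{x..y}. f t = m * t + c)))"

definition piecewise_constant_on :: "real \<Rightarrow> real \<Rightarrow> (real \<Rightarrow> real) \<Rightarrow> bool" where
  "piecewise_constant_on a b f \<longleftrightarrow>
     (\<exists>S. finite S \<and> a \<in> S \<and> b \<in> S \<and> S \<subseteq> {a..b} \<and>
        (\<forall>x\<in>S. \<forall>y\<in>S. x < y \<and> {x<..<y} \<inter> S = {} \<longrightarrow>
           (\<exists>c. \<forall>t\<in>{x<..<y}. f t = c)))"

end

theory Submission
  imports Defs
begin

definition Tt :: "nat \<Rightarrow> nat \<Rightarrow> real" where
  "Tt N j = (\<Sum>i\<in>{j<..N}. mu_seq i) / 2"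

definition kap :: "nat \<Rightarrow> real \<Rightarrow> nat" where
  "kap N t = (\<Sum>j\<in>{1..N}. if t < Tt N (j-1) then 1 else 0)"

lemma mu_pos: "k \<ge> 1 \<Longrightarrow> mu_seq k > 0"
  by (simp add: mu_seq_def)

lemma mu_nonneg: "mu_seq k \<ge> 0"
  by (simp add: mu_seq_def)

lemma Tt_N: "Tt N N = 0"
  by (simp add: Tt_def)

lemma Tt_nonneg: "Tt N j \<ge> 0"
  unfolding Tt_def by (intro divide_nonneg_pos sum_nonneg) (auto simp: mu_nonneg)

lemma Tt_step: assumes "1 \<le> j" "j \<le> N" shows "Tt N (j-1) = Tt N j + mu_seq j / 2"
proof -
  have "{j-1<..N} = insert j {j<..N}" using assms by auto
  then show ?thesis unfolding Tt_def by (simp add: add_divide_distrib)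
qed

lemma Tt_antimono: assumes "i \<le> j" shows "Tt N j \<le> Tt N i"
proof -
  have "(\<Sum>x\<in>{j<..N}. mu_seq x) \<le> (\<Sum>x\<in>{i<..N}. mu_seq x)"
    by (rule sum_mono2) (use assms in \<open>auto simp: mu_nonneg\<close>)
  then show ?thesis unfolding Tt_def by simp
qed

lemma geom_half: "(\<Sum>i\<in>{j<..N}. (1/2::real)^i) \<le> (1/2)^j"
proof (induction N)
  case 0 then show ?case by simp
next
  case (Suc N)
  show ?case
  proof (cases "j < Suc N")
    case True
    then have e: "{j<..Suc N} = insert (Suc N) {j<..N}" by auto
    have "(\<Sum>i\<in>{j<..N}. (1/2::real)^i) = (1/2)^j - (1/2)^N" if "j \<le> N" using that
    proof (induction N)
      case 0 then show ?case by simp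
    next
      case (Suc N)
      show ?case
      proof (cases "j = Suc N")
        case True then show ?thesis by simp
      next
        case False
        then have "j \<le> N" using Suc by simp
        have e2: "{j<..Suc N} = insert (Suc N) {j<..N}" using \<open>j \<le> N\<close> by auto
        show ?thesis using Suc.IH[OF \<open>j \<le> N\<close>] by (simp add: e2)
      qed
    qed
    then have "(\<Sum>i\<in>{j<..Suc N}. (1/2::real)^i) = (1/2)^j - (1/2)^Suc N"
      using True by (simp add: e)
    then show ?thesis by simp
  next
    case False
    then have "{j<..Suc N} = {}" by auto
    then show ?thesis by simp
  qed
qed

lemma Tt_upper: "Tt N j \<le> (1/2)^j / (4 * (real j + 1))"
proof -
  have "(\<Sum>i\<in>{j<..N}. mu_seq i) \<le> (\<Sum>i\<in>{j<..N}. (1/2::real)^i / (2 * (real j + 1)))"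
  proof (rule sum_mono)
    fix i assume "i \<in> {j<..N}"
    then have "real i \<ge> real j + 1" by auto
    then have "2 * real i * 2^i \<ge> 2 * (real j + 1) * 2^i" by simp
    then have "1 / (2 * real i * 2^i) \<le> 1 / (2 * (real j + 1) * 2^i)"
      by (intro divide_left_mono) auto
    then show "mu_seq i \<le> (1/2)^i / (2 * (real j + 1))"
      unfolding mu_seq_def by (simp add: power_one_over mult.commute)
  qed
  also have "\<dots> = (\<Sum>i\<in>{j<..N}. (1/2::real)^i) / (2 * (real j + 1))"
    by (simp add: sum_divide_distrib)
  also have "\<dots> \<le> (1/2)^j / (2 * (real j + 1))"
    by (intro divide_right_mono geom_half) auto
  finally have "(\<Sum>i\<in>{j<..N}. mu_seq i) \<le> (1/2)^j / (2 * (real j + 1))" .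
  then have "(\<Sum>i\<in>{j<..N}. mu_seq i) / 2 \<le> ((1/2)^j / (2 * (real j + 1))) / 2"
    by (rule divide_right_mono) auto
  also have "((1/2::real)^j / (2 * (real j + 1))) / 2 = (1/2)^j / (4 * (real j + 1))" by simp
  finally show ?thesis unfolding Tt_def .
qed

lemma Tt_lower: assumes "j < N" shows "Tt N j \<ge> mu_seq (Suc j) / 2"
proof -
  have "mu_seq (Suc j) \<le> (\<Sum>i\<in>{j<..N}. mu_seq i)"
    by (rule member_le_sum) (use assms in \<open>auto simp: mu_nonneg\<close>)
  then show ?thesis unfolding Tt_def by simp
qed

lemma Tt0_le: "Tt N 0 \<le> 1/4"
proof -
  have "(\<Sum>i\<in>{0<..N}. mu_seq i) \<le> (\<Sum>i\<in>{0<..N}. (1/2::real)^i / 2)"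
  proof (rule sum_mono)
    fix i assume "i \<in> {0<..N}"
    then have "real i \<ge> 1" by auto
    then have "2 * real i * 2^i \<ge> 2 * 2^i" by simp
    then have "1 / (2 * real i * 2^i) \<le> 1 / (2 * 2^i)"
      by (intro divide_left_mono) auto
    then show "mu_seq i \<le> (1/2)^i / 2"
      unfolding mu_seq_def by (simp add: power_one_over)
  qed
  also have "\<dots> = (\<Sum>i\<in>{0<..N}. (1/2::real)^i) / 2" by (simp add: sum_divide_distrib)
  also have "\<dots> \<le> 1/2" using geom_half[of 0 N] by simp
  finally show ?thesis unfolding Tt_def by simp
qed

lemma kap_char:
  assumes "j \<in> {1..N}"
  shows "t < Tt N (j-1) \<longleftrightarrow> j \<le> kap N t"
proof -
  define A where "A = {j\<in>{1..N}. t < Tt N (j-1)}"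
  have fin: "finite A" unfolding A_def by auto
  have kA: "kap N t = card A"
    unfolding kap_def A_def by (simp add: sum.If_cases Int_def conj_commute)
  have dc: "i \<in> A" if "j' \<in> A" "1 \<le> i" "i \<le> j'" for i j'
  proof -
    have "Tt N (j'-1) \<le> Tt N (i-1)" by (rule Tt_antimono) (use that in auto)
    then show ?thesis using that unfolding A_def by auto
  qed
  define m where "m = (if A = {} then 0 else Max A)"
  have Aeq: "A = {1..m}"
  proof
    show "A \<subseteq> {1..m}"
    proof
      fix x assume "x \<in> A"
      then have "x \<ge> 1" "x \<le> Max A" "A \<noteq> {}" using fin unfolding A_def by auto
      then show "x \<in> {1..m}" unfolding m_def by auto
    qed
  next
    show "{1..m} \<subseteq> A"
    proof
      fix x assume x: "x \<in> {1..m}"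
      then have "A \<noteq> {}" unfolding m_def by (auto split: if_splits)
      then have "Max A \<in> A" using fin by auto
      then show "x \<in> A" using dc[of "Max A" x] x unfolding m_def by (auto split: if_splits)
    qed
  qed
  then have km: "kap N t = m" using kA by simp
  show ?thesis
  proof
    assume "t < Tt N (j-1)"
    then have "j \<in> A" using assms unfolding A_def by auto
    then show "j \<le> kap N t" using Aeq km by auto
  next
    assume "j \<le> kap N t"
    then have "j \<in> A" using Aeq km assms by auto
    then show "t < Tt N (j-1)" unfolding A_def by auto
  qed
qed

lemma kap_le: "kap N t \<le> N"
proof -
  have "kap N t \<le> (\<Sum>j\<in>{1..N}. (1::nat))" unfolding kap_def by (intro sum_mono) auto
  then show ?thesis by simp
qed

lemma kap_ge: assumes "1 \<le> k" "k \<le> N" "t < Tt N (k-1)" shows "k \<le> kap N t"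
  using kap_char[of k N t] assms by auto

lemma kap_leI: assumes "k \<le> N" "Tt N k \<le> t" shows "kap N t \<le> k"
proof (rule ccontr)
  assume "\<not> kap N t \<le> k"
  then have "Suc k \<le> kap N t" by simp
  then have "t < Tt N (Suc k - 1)" using kap_char[of "Suc k" N t] kap_le[of N t] by auto
  then show False using assms by simp
qed

lemma kap_lt_T: assumes "1 \<le> kap N t" shows "t < Tt N (kap N t - 1)"
  using kap_char[of "kap N t" N t] kap_le[of N t] assms by auto

lemma kap_ge_T: assumes "kap N t < N" shows "Tt N (kap N t) \<le> t"
proof (rule ccontr)
  assume "\<not> Tt N (kap N t) \<le> t"
  then have "t < Tt N (Suc (kap N t) - 1)" by simp
  then have "Suc (kap N t) \<le> kap N t" using kap_char[of "Suc (kap N t)" N t] assms by auto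
  then show False by simp
qed

lemma kap_eq: assumes "1 \<le> k" "k \<le> N" "Tt N k < t" "t < Tt N (k-1)" shows "kap N t = k"
  using kap_ge[of k N t] kap_leI[of k N t] assms by auto

lemma kap_zero: assumes "Tt N 0 < t" shows "kap N t = 0"
  using kap_leI[of 0 N t] assms by auto

lemma kap_mono: assumes "t \<le> t'" shows "kap N t' \<le> kap N t"
proof (cases "kap N t' = 0")
  case True then show ?thesis by simp
next
  case False
  then have "t' < Tt N (kap N t' - 1)" using kap_lt_T by auto
  then have "t < Tt N (kap N t' - 1)" using assms by simp
  then show ?thesis using kap_ge[of "kap N t'" N t] kap_le[of N t'] False by auto
qed

lemma Tt_double: assumes "1 \<le> j" "j \<le> N" shows "2 * Tt N j \<le> Tt N (j-1)"
proof -
  have "Tt N j \<le> (1/2)^j / (4 * (real j + 1))" by (rule Tt_upper)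
  also have "\<dots> \<le> (1/2)^j / (4 * real j)"
    using assms by (intro divide_left_mono) auto
  also have "\<dots> = mu_seq j / 2" unfolding mu_seq_def by (simp add: power_one_over)
  finally show ?thesis using Tt_step[OF assms] by simp
qed

lemma kap_double: assumes "0 \<le> t" shows "kap N t \<le> kap N (2*t) + 1"
proof (cases "kap N t \<le> 1")
  case True then show ?thesis by simp
next
  case False
  define k where "k = kap N t"
  have "k \<le> N" using kap_le k_def by simp
  have "t < Tt N (k-1)" using kap_lt_T[of N t] False k_def by simp
  then have "2*t < 2 * Tt N (k-1)" by simp
  also have "\<dots> \<le> Tt N (k-1-1)" using Tt_double[of "k-1" N] False \<open>k \<le> N\<close> k_def by simp
  finally have "k - 1 \<le> kap N (2*t)" using kap_ge[of "k-1" N "2*t"] False \<open>k \<le> N\<close> k_def by simp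
  then show ?thesis using k_def by simp
qed

lemma has_integral_const_open:
  fixes f :: "real \<Rightarrow> real"
  assumes "a \<le> b" "\<And>t. a < t \<Longrightarrow> t < b \<Longrightarrow> f t = c"
  shows "(f has_integral c * (b - a)) {a..b}"
proof -
  have "((\<lambda>x. c) has_integral (Henstock_Kurzweil_Integration.content {a..b} *\<^sub>R c)) {a..b}" by (rule has_integral_const_real)
  then have *: "((\<lambda>x. c) has_integral c * (b - a)) {a..b}" using assms(1) by (simp add: mult.commute)
  show ?thesis
    by (rule has_integral_spike_finite[where S="{a,b}", OF _ _ *]) (use assms in auto)
qed

lemma kap_integral_low:
  fixes F :: "nat \<Rightarrow> real"
  assumes "m \<le> N"
  shows "((\<lambda>t. F (kap N t)) has_integral (\<Sum>j\<in>{m<..N}. F j * (mu_seq j / 2))) {0..Tt N m}"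
  using assms
proof (induction "N - m" arbitrary: m)
  case 0
  then have "m = N" by simp
  then show ?case using has_integral_refl(1)[of "\<lambda>t. F (kap N t)" "0::real"] by (simp add: Tt_N)
next
  case (Suc d)
  then have mN: "m < N" by simp
  have IH: "((\<lambda>t. F (kap N t)) has_integral (\<Sum>j\<in>{Suc m<..N}. F j * (mu_seq j / 2))) {0..Tt N (Suc m)}"
    using Suc by simp
  have st: "Tt N m = Tt N (Suc m) + mu_seq (Suc m) / 2" using Tt_step[of "Suc m" N] mN by simp
  have seg: "((\<lambda>t. F (kap N t)) has_integral F (Suc m) * (mu_seq (Suc m) / 2)) {Tt N (Suc m)..Tt N m}"
  proof -
    have "((\<lambda>t. F (kap N t)) has_integral F (Suc m) * (Tt N m - Tt N (Suc m))) {Tt N (Suc m)..Tt N m}"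
      by (rule has_integral_const_open) (use kap_eq[of "Suc m" N] mN Tt_antimono[of m "Suc m" N] in auto)
    then show ?thesis using st by simp
  qed
  have "((\<lambda>t. F (kap N t)) has_integral (\<Sum>j\<in>{Suc m<..N}. F j * (mu_seq j / 2)) + F (Suc m) * (mu_seq (Suc m) / 2)) {0..Tt N m}"
    by (rule has_integral_combine[OF _ _ IH seg]) (use Tt_nonneg Tt_antimono[of m "Suc m" N] in auto)
  moreover have "{m<..N} = insert (Suc m) {Suc m<..N}" using mN by auto
  ultimately show ?case by (simp add: add.commute)
qed

lemma kap_integral_high:
  fixes F :: "nat \<Rightarrow> real"
  assumes "Tt N 0 \<le> R"
  shows "((\<lambda>t. F (kap N t)) has_integral F 0 * (R - Tt N 0)) {Tt N 0..R}"
  by (rule has_integral_const_open) (use assms kap_zero in auto)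

lemma kap_integral_full:
  fixes F :: "nat \<Rightarrow> real"
  assumes "Tt N 0 \<le> R"
  shows "((\<lambda>t. F (kap N t)) has_integral (\<Sum>j\<in>{0<..N}. F j * (mu_seq j / 2)) + F 0 * (R - Tt N 0)) {0..R}"
  by (rule has_integral_combine[OF _ _ kap_integral_low[of 0 N F] kap_integral_high[OF assms]])
     (use assms Tt_nonneg in auto)

lemma kap_integrable:
  fixes F :: "nat \<Rightarrow> real"
  shows "(\<lambda>t. F (kap N t)) integrable_on {a..b}"
proof -
  define R where "R = max (max (abs a) (abs b)) (Tt N 0)"
  have "((\<lambda>t. F (kap N t)) integrable_on {0..R})"
    using kap_integral_full[of N R F] unfolding R_def by auto
  moreover have "((\<lambda>t. F (kap N t)) integrable_on {-R..0})"
  proof -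
    have "((\<lambda>t. F (kap N t)) has_integral F (kap N 0) * (0 - (-R))) {-R..0}"
    proof (rule has_integral_const_open)
      show "-R \<le> 0" unfolding R_def using Tt_nonneg[of N 0] by auto
      fix t assume "-R < t" "t < (0::real)"
      have "kap N t = kap N 0"
      proof -
        have "kap N 0 \<le> kap N t" using kap_mono \<open>t < 0\<close> by simp
        moreover have "kap N t \<le> kap N 0"
        proof (cases "kap N t = 0")
          case False
          then have "t < Tt N (kap N t - 1)" using kap_lt_T by auto
          moreover have "0 < Tt N (kap N t - 1)"
          proof -
            have "kap N t \<le> N" by (rule kap_le)
            then have "mu_seq (kap N t) / 2 > 0" using mu_pos[of "kap N t"] False by simp
            then show ?thesis using Tt_step[of "kap N t" N] False \<open>kap N t \<le> N\<close> Tt_nonneg[of N "kap N t"] by simp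
          qed
          ultimately show ?thesis using kap_ge[of "kap N t" N 0] False kap_le[of N t] by simp
        qed simp
        ultimately show ?thesis by simp
      qed
      then show "F (kap N t) = F (kap N 0)" by simp
    qed
    then show ?thesis by auto
  qed
  ultimately have "(\<lambda>t. F (kap N t)) integrable_on {-R..R}"
    using Henstock_Kurzweil_Integration.integrable_combine[where a="-R" and c=0 and b=R] unfolding R_def by (smt (verit, best) Tt_nonneg)
  then show ?thesis
    by (rule integrable_subinterval_real) (auto simp: R_def)
qed

definition rho1 :: "real \<Rightarrow> real" where
  "rho1 y = 1/2 - infdist y \<int>"

lemma infdist_Ints_cell:
  fixes n :: int
  assumes "of_int n \<le> y" "y \<le> of_int n + 1"
  shows "infdist y \<int> = min (y - of_int n) (of_int n + 1 - y)"
proof (rule antisym)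
  have "infdist y \<int> \<le> dist y (of_int n)" by (rule infdist_le) simp
  moreover have "infdist y \<int> \<le> dist y (of_int (n+1))" by (rule infdist_le) (simp only: Ints_of_int)
  ultimately show "infdist y \<int> \<le> min (y - of_int n) (of_int n + 1 - y)"
    using assms by (auto simp: dist_real_def)
next
  have ne: "(\<int>::real set) \<noteq> {}" using Ints_0 by blast
  have "min (y - of_int n) (of_int n + 1 - y) \<le> (INF a\<in>\<int>. dist y a)"
  proof (rule cINF_greatest[OF ne])
    fix a :: real assume "a \<in> \<int>"
    then obtain m where m: "a = of_int m" by (auto elim: Ints_cases)
    show "min (y - of_int n) (of_int n + 1 - y) \<le> dist y a"
    proof (cases "m \<le> n")
      case True
      then have "real_of_int m \<le> of_int n" by simp
      then show ?thesis using assms m by (auto simp: dist_real_def)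
    next
      case False
      then have "real_of_int m \<ge> of_int n + 1" by linarith
      then show ?thesis using assms m by (auto simp: dist_real_def)
    qed
  qed
  then show "min (y - of_int n) (of_int n + 1 - y) \<le> infdist y \<int>"
    using infdist_notempty[OF ne] by simp
qed

lemma rho1_cell:
  fixes n :: int
  assumes "of_int n \<le> y" "y \<le> of_int n + 1"
  shows "rho1 y = \<bar>y - of_int n - 1/2\<bar>"
  unfolding rho1_def infdist_Ints_cell[OF assms] by (auto simp: min_def abs_if)

lemma rho1_floor: "rho1 y = \<bar>y - of_int \<lfloor>y\<rfloor> - 1/2\<bar>"
  by (rule rho1_cell) linarith+

lemma rho1_bounds: "0 \<le> rho1 y" "rho1 y \<le> 1/2"
  unfolding rho1_floor by linarith+

lemma rho1_int: "rho1 (of_int n) = 1/2"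
  using rho1_cell[of n "of_int n"] by simp

lemma continuous_rho1: "continuous_on UNIV rho1"
  unfolding rho1_def by (intro continuous_intros)

lemma isCont_rho1: "isCont rho1 x"
  using continuous_rho1 by (simp add: continuous_on_eq_continuous_at)

lemma has_integral_shift_real:
  fixes h :: "real \<Rightarrow> real"
  assumes "(h has_integral I) {a..b}"
  shows "((\<lambda>y. h (y - c)) has_integral I) {a+c..b+c}"
proof -
  have "((\<lambda>x. h (1 *\<^sub>R x + (-c))) has_integral (I /\<^sub>R 1 ^ DIM(real)))
           (cbox ((a - (-c)) /\<^sub>R 1) ((b - (-c)) /\<^sub>R 1))"
    by (rule has_integral_affinity') (use assms in auto)
  then show ?thesis by (simp add: algebra_simps)
qed

lemma has_integral_scale_real:
  fixes h :: "real \<Rightarrow> real"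
  assumes "(h has_integral I) {M*a..M*b}" "M > 0"
  shows "((\<lambda>x. h (M * x)) has_integral I / M) {a..b}"
proof -
  have "((\<lambda>x. h (M *\<^sub>R x + 0)) has_integral (I /\<^sub>R M ^ DIM(real)))
           (cbox ((M*a - 0) /\<^sub>R M) ((M*b - 0) /\<^sub>R M))"
    by (rule has_integral_affinity') (use assms in auto)
  moreover have "inverse M * (M * a) = a" "inverse M * (M * b) = b" using assms(2) by auto
  ultimately show ?thesis using assms(2) by (simp add: divide_inverse_commute)
qed

lemma has_integral_sym:
  fixes f :: "real \<Rightarrow> real"
  assumes "(f has_integral I) {0..D}" "0 \<le> D"
  shows "((\<lambda>y. f \<bar>y - c\<bar>) has_integral 2 * I) {c-D..c+D}"
proof -
  have r: "((\<lambda>y. f (y - c)) has_integral I) {0+c..D+c}"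
    by (rule has_integral_shift_real[OF assms(1)])
  have r2: "((\<lambda>y. f \<bar>y - c\<bar>) has_integral I) {c..c+D}"
    using r by (subst has_integral_cong[where g="\<lambda>y. f (y - c)"]) (auto simp: add.commute)
  have "((\<lambda>x. f (-x)) has_integral I) {-D..-0}" using assms(1) has_integral_reflect_real[where f=f and i=I and a=0 and b=D] by simp
  then have l: "((\<lambda>y. f (-(y - c))) has_integral I) {-D+c..-0+c}"
    by (rule has_integral_shift_real)
  have l2: "((\<lambda>y. f \<bar>y - c\<bar>) has_integral I) {c-D..c}"
    using l by (subst has_integral_cong[where g="\<lambda>y. f (-(y - c))"]) (auto simp: abs_if)
  have "((\<lambda>y. f \<bar>y - c\<bar>) has_integral I + I) {c-D..c+D}"
    by (rule has_integral_combine[OF _ _ l2 r2]) (use assms in auto)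
  then show ?thesis by simp
qed

lemma periodic_integral:
  fixes f :: "real \<Rightarrow> real" and m :: int
  assumes "((\<lambda>y. f \<bar>y - 1/2\<bar>) has_integral I) {0..1}"
  shows "((\<lambda>y. f (rho1 y)) has_integral (real n * I)) {of_int m..of_int m + real n}"
proof (induction n)
  case 0
  then show ?case using has_integral_refl(1)[of "\<lambda>y. f (rho1 y)" "of_int m::real"] by simp
next
  case (Suc n)
  define k where "k = m + int n"
  have kk: "real_of_int k = of_int m + real n" unfolding k_def by simp
  have "((\<lambda>y. f \<bar>(y - of_int k) - 1/2\<bar>) has_integral I) {0 + of_int k..1 + of_int k}"
    using has_integral_shift_real[OF assms, of "of_int k"] by simp
  then have seg: "((\<lambda>y. f (rho1 y)) has_integral I) {of_int m + real n..of_int m + real n + 1}"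
    by (subst has_integral_cong[where g="\<lambda>y. f \<bar>(y - of_int k) - 1/2\<bar>"])
       (auto simp: rho1_cell[of k] kk add.commute)
  have "((\<lambda>y. f (rho1 y)) has_integral (real n * I + I)) {of_int m..of_int m + real n + 1}"
    by (rule has_integral_combine[OF _ _ Suc seg]) auto
  then show ?case by (simp add: algebra_simps)
qed

lemma geom_sum_le:
  fixes q :: real
  assumes "0 \<le> q" "q < 1"
  shows "(\<Sum>j\<in>{K<..N}. q^j) \<le> q^(Suc K) / (1 - q)"
proof -
  have eq: "(\<Sum>j\<in>{K<..N}. q^j) = (q^(Suc K) - q^(Suc N)) / (1 - q)" if "K \<le> N" for N
    using that
  proof (induction N)
    case 0 then show ?case by simp
  next
    case (Suc N)
    show ?case
    proof (cases "K = Suc N")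
      case True then show ?thesis by simp
    next
      case False
      then have "K \<le> N" using Suc by simp
      have e2: "{K<..Suc N} = insert (Suc N) {K<..N}" using \<open>K \<le> N\<close> by auto
      have "(\<Sum>j\<in>{K<..Suc N}. q^j) = q^(Suc N) + (q^(Suc K) - q^(Suc N)) / (1 - q)"
        by (simp add: e2 Suc.IH[OF \<open>K \<le> N\<close>])
      also have "\<dots> = (q^(Suc K) - q^(Suc (Suc N))) / (1 - q)"
      proof -
        have "1 - q \<noteq> 0" using assms by simp
        then show ?thesis by (simp add: divide_simps algebra_simps)
      qed
      finally show ?thesis .
    qed
  qed
  show ?thesis
  proof (cases "K \<le> N")
    case True
    have "q^(Suc N) \<ge> 0" using assms by simp
    then show ?thesis using eq[OF True] assms by (simp add: divide_right_mono)
  next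
    case False
    then have "{K<..N} = {}" by auto
    then show ?thesis using assms by simp
  qed
qed

lemma aux_alg:
  fixes z d k Q :: real
  assumes "z > 0" "d \<noteq> 0" "k + 1 > 0"
  shows "(2/d) * (1/(2*(k+1)*(2*z))/2) * (z*Q) = (Q/d)/(4*(k+1))"
  using assms by (auto simp: divide_simps)

lemma lemma_L:
  fixes s p q CL :: real
  assumes s: "0 < s" "s < 1" and p: "p = 2 powr s" and q: "q = p / 2"
    and CL: "CL = 1 + 2 / (1 - q)" and rho: "0 \<le> \<rho>"
  shows "integral {0..\<rho>} (\<lambda>t. p ^ kap N t) \<le> CL * \<rho> * p ^ kap N \<rho>"
proof -
  have p1: "1 < p" using s p by simp
  have p2: "p < 2" using s p powr_less_mono[of s 1 2] by simp
  have q0: "0 < q" "q < 1" using p1 p2 q by auto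
  have CL1: "CL \<ge> 1 + 2 / (1 - q)" using CL by simp
  have CLge: "CL \<ge> 1" using CL q0 by simp
  define K where "K = kap N \<rho>"
  have intg: "(\<lambda>t. p ^ kap N t) integrable_on {a..b}" for a b
    by (rule kap_integrable)
  show ?thesis
  proof (cases "K = N")
    case True
    have "integral {0..\<rho>} (\<lambda>t. p ^ kap N t) \<le> integral {0..\<rho>} (\<lambda>t. p ^ K)"
      by (rule integral_le[OF intg]) (use True kap_le p1 in \<open>auto intro: power_increasing\<close>)
    also have "\<dots> = \<rho> * p ^ K" using rho by simp
    also have "\<dots> \<le> CL * (\<rho> * p ^ K)" using CLge rho p1
      mult_right_mono[of 1 CL "\<rho> * p^K"] by simp
    also have "\<dots> = CL * \<rho> * p ^ K" by simp
    finally show ?thesis unfolding K_def .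
  next
    case False
    then have KN: "K < N" using kap_le[of N \<rho>] K_def by simp
    have TK: "Tt N K \<le> \<rho>" using kap_ge_T[of N \<rho>] KN K_def by simp
    have TK0: "0 \<le> Tt N K" by (rule Tt_nonneg)
    have low: "((\<lambda>t. p ^ kap N t) has_integral (\<Sum>j\<in>{K<..N}. p^j * (mu_seq j / 2))) {0..Tt N K}"
      by (rule kap_integral_low) (use KN in simp)
    have comb: "integral {0..\<rho>} (\<lambda>t. p ^ kap N t) = integral {0..Tt N K} (\<lambda>t. p ^ kap N t) + integral {Tt N K..\<rho>} (\<lambda>t. p ^ kap N t)"
      by (rule Henstock_Kurzweil_Integration.integral_combine[symmetric, OF TK0 TK intg])
    have hi: "integral {Tt N K..\<rho>} (\<lambda>t. p ^ kap N t) \<le> (\<rho> - Tt N K) * p ^ K"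
    proof -
      have "integral {Tt N K..\<rho>} (\<lambda>t. p ^ kap N t) \<le> integral {Tt N K..\<rho>} (\<lambda>t. p ^ K)"
        by (rule integral_le[OF intg]) (use kap_leI[of K N] KN p1 in \<open>auto intro: power_increasing\<close>)
      then show ?thesis using TK by simp
    qed
    have sumeq: "(\<Sum>j\<in>{K<..N}. p^j * (mu_seq j / 2)) = (\<Sum>j\<in>{K<..N}. q^j / (4 * real j))"
    proof (rule sum.cong)
      fix j assume "j \<in> {K<..N}"
      have p2q: "p = 2*q" using q by simp
      have "p^j = 2^j * q^j" by (simp only: p2q power_mult_distrib)
      then show "p^j * (mu_seq j / 2) = q^j / (4 * real j)"
        unfolding mu_seq_def by simp
    qed simp
    have "(\<Sum>j\<in>{K<..N}. q^j / (4 * real j)) \<le> (\<Sum>j\<in>{K<..N}. q^j / (4 * (real K + 1)))"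
    proof (rule sum_mono)
      fix j assume "j \<in> {K<..N}"
      then have "real j \<ge> real K + 1" by auto
      then show "q^j / (4 * real j) \<le> q^j / (4 * (real K + 1))"
        using q0 by (intro divide_left_mono) auto
    qed
    also have "\<dots> = (\<Sum>j\<in>{K<..N}. q^j) / (4 * (real K + 1))" by (simp add: sum_divide_distrib)
    also have "\<dots> \<le> (q^(Suc K) / (1 - q)) / (4 * (real K + 1))"
      by (intro divide_right_mono geom_sum_le) (use q0 in auto)
    also have "\<dots> \<le> (q^K / (1 - q)) / (4 * (real K + 1))"
      using q0 by (intro divide_right_mono) (simp_all add: power_decreasing)
    also have "\<dots> = (2 / (1 - q)) * (mu_seq (Suc K) / 2) * p ^ K"
    proof -
      have p2q: "p = 2*q" using q by simp
      have pk: "p ^ K = 2^K * q^K" by (simp only: p2q power_mult_distrib)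
      have "(2 / (1 - q)) * (mu_seq (Suc K) / 2) * p ^ K = (2 / (1 - q)) * (1 / (2 * (real K + 1) * (2 * 2^K)) / 2) * (2^K * q^K)"
        unfolding mu_seq_def pk by simp
      also have "\<dots> = (q^K / (1 - q)) / (4 * (real K + 1))"
        by (rule aux_alg) (use q0 in auto)
      finally show ?thesis by simp
    qed
    also have "\<dots> \<le> (2 / (1 - q)) * Tt N K * p ^ K"
    proof -
      have "0 \<le> 2 / (1 - q)" using q0 by simp
      then have "(2 / (1 - q)) * (mu_seq (Suc K) / 2) \<le> (2 / (1 - q)) * Tt N K"
        by (rule mult_left_mono[OF Tt_lower[OF KN]])
      then show ?thesis by (rule mult_right_mono) (use p1 in simp)
    qed
    finally have lowb: "(\<Sum>j\<in>{K<..N}. p^j * (mu_seq j / 2)) \<le> (2 / (1 - q)) * Tt N K * p ^ K"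
      using sumeq by simp
    have "integral {0..\<rho>} (\<lambda>t. p ^ kap N t) \<le> (2 / (1 - q)) * Tt N K * p ^ K + (\<rho> - Tt N K) * p ^ K"
      using comb hi lowb low by (simp add: integral_unique)
    also have "\<dots> \<le> (2 / (1 - q)) * \<rho> * p ^ K + \<rho> * p ^ K"
    proof (rule add_mono)
      have "0 \<le> 2 / (1 - q)" using q0 by simp
      then have "(2 / (1 - q)) * Tt N K \<le> (2 / (1 - q)) * \<rho>" by (rule mult_left_mono[OF TK])
      then show "(2 / (1 - q)) * Tt N K * p ^ K \<le> (2 / (1 - q)) * \<rho> * p ^ K"
        by (rule mult_right_mono) (use p1 in simp)
      show "(\<rho> - Tt N K) * p ^ K \<le> \<rho> * p ^ K" using TK0 p1 by (intro mult_right_mono) simp_all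
    qed
    also have "\<dots> = CL * \<rho> * p ^ K" using CL by (simp add: algebra_simps)
    finally show ?thesis unfolding K_def .
  qed
qed

lemma generic_bound:
  fixes W V :: "real \<Rightarrow> real"
  assumes ab: "a < b" and r: "r > 1"
    and iW: "W integrable_on {a..b}" and iV: "V integrable_on {a..b}"
    and W0: "\<And>y. y \<in> {a..b} \<Longrightarrow> 0 \<le> W y" and WA: "\<And>y. y \<in> {a..b} \<Longrightarrow> W y \<le> A0"
    and V0: "\<And>y. y \<in> {a..b} \<Longrightarrow> 0 \<le> V y"
    and VB: "integral {a..b} V \<le> (b - a) * B0"
  shows "(integral {a..b} W / (b - a)) * (integral {a..b} V / (b - a)) powr (r - 1) \<le> A0 * B0 powr (r - 1)"
proof -
  have l: "b - a > 0" using ab by simp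
  have i1: "0 \<le> integral {a..b} W" by (rule integral_nonneg[OF iW]) (use W0 in auto)
  have i2: "integral {a..b} W \<le> integral {a..b} (\<lambda>y. A0)" by (rule integral_le[OF iW]) (use WA in auto)
  then have i2': "integral {a..b} W / (b - a) \<le> A0" using l ab by (simp add: divide_le_eq mult.commute)
  have j1: "0 \<le> integral {a..b} V" by (rule integral_nonneg[OF iV]) (use V0 in auto)
  have j2: "integral {a..b} V / (b - a) \<le> B0" using VB l by (simp add: divide_le_eq mult.commute)
  have A00: "0 \<le> A0" using i1 i2' l by (meson divide_nonneg_pos order_trans)
  have "(integral {a..b} V / (b - a)) powr (r - 1) \<le> B0 powr (r - 1)"
    by (rule powr_mono2) (use r j1 l j2 in auto)
  then show ?thesis
    by (rule mult_mono[OF i2']) (use A00 i1 l in auto)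
qed

lemma p_pow_powr:
  fixes r :: real
  assumes "r > 1"
  shows "((2 powr (1 / (r - 1))) ^ k) powr (r - 1) = 2 ^ k"
proof -
  have "(2 powr (1 / (r - 1))) ^ k = 2 powr (real k * (1 / (r - 1)))"
    by (rule powr_power) simp
  then have "((2 powr (1 / (r - 1))) ^ k) powr (r - 1) = 2 powr (real k * (1 / (r - 1)) * (r - 1))"
    by (simp add: powr_powr)
  also have "real k * (1 / (r - 1)) * (r - 1) = real k" using assms by simp
  finally show ?thesis by (simp add: powr_realpow)
qed

lemma half_pow_powr:
  fixes r :: real
  assumes "r > 1"
  shows "((1/2::real) ^ k) powr (- (1 / (r - 1))) = (2 powr (1 / (r - 1))) ^ k"
proof -
  have "((1/2::real) ^ k) = 2 powr (- real k)" by (simp add: powr_minus powr_realpow power_one_over inverse_eq_divide)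
  then have "((1/2::real) ^ k) powr (- (1 / (r - 1))) = 2 powr (- real k * (- (1 / (r - 1))))"
    by (simp add: powr_powr)
  also have "\<dots> = 2 powr (real k * (1 / (r - 1)))" by simp
  also have "\<dots> = (2 powr (1 / (r - 1))) ^ k" by (rule powr_power[symmetric]) simp
  finally show ?thesis .
qed

lemma integrable_ext:
  fixes h :: "real \<Rightarrow> real"
  assumes "h integrable_on {0..L}" "0 \<le> L"
  shows "(\<lambda>y. if y \<in> {0..L} then h y else 1) integrable_on {a..b}"
proof -
  define R where "R = max (max \<bar>a\<bar> \<bar>b\<bar>) L + 1"
  let ?f = "\<lambda>y. if y \<in> {0..L} then h y else 1"
  have R: "R \<ge> L" "R \<ge> 0" "{a..b} \<subseteq> {-R..R}" unfolding R_def by auto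
  have i1: "?f integrable_on {0..L}"
    using assms(1) by (rule integrable_eq) auto
  have i0: "?f integrable_on {-R..0}"
  proof -
    have c: "((\<lambda>y. 1::real) has_integral 1 * (0 - (-R))) {-R..0}"
      by (rule has_integral_const_open) (use R in auto)
    have "(?f has_integral 1 * (0 - (-R))) {-R..0}"
      by (rule has_integral_spike_finite[where S="{0}", OF _ _ c]) auto
    then show ?thesis by auto
  qed
  have i2: "?f integrable_on {L..R}"
  proof -
    have c: "((\<lambda>y. 1::real) has_integral 1 * (R - L)) {L..R}"
      by (rule has_integral_const_open) (use R in auto)
    have "(?f has_integral 1 * (R - L)) {L..R}"
      by (rule has_integral_spike_finite[where S="{L}", OF _ _ c]) auto
    then show ?thesis by auto
  qed
  have i3: "?f integrable_on {-R..L}"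
    by (rule Henstock_Kurzweil_Integration.integrable_combine[OF _ _ i0 i1]) (use R assms in auto)
  have "?f integrable_on {-R..R}"
    by (rule Henstock_Kurzweil_Integration.integrable_combine[OF _ _ i3 i2]) (use R assms in auto)
  then show ?thesis by (rule integrable_subinterval_real) (use R in auto)
qed

definition Wt :: "nat \<Rightarrow> nat \<Rightarrow> real \<Rightarrow> real" where
  "Wt N M y = (if y \<in> {0..real M} then (1/2::real) ^ kap N (rho1 y) else 1)"

definition CLf :: "real \<Rightarrow> real" where
  "CLf r = 1 + 2 / (1 - 2 powr (1 / (r - 1)) / 2)"

definition Cfun :: "real \<Rightarrow> real" where
  "Cfun r = max 2 ((17 * CLf r) powr (r - 1))"

lemma sym_half_integral:
  fixes F :: "nat \<Rightarrow> real"
  shows "((\<lambda>y. F (kap N \<bar>y - 1/2\<bar>)) has_integral 2 * integral {0..1/2} (\<lambda>t. F (kap N t))) {0..1}"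
  using has_integral_sym[of "\<lambda>t. F (kap N t)" "integral {0..1/2} (\<lambda>t. F (kap N t))" "1/2" "1/2"]
    kap_integrable[of F N 0 "1/2"] by auto

lemma per_has_integral:
  fixes F :: "nat \<Rightarrow> real" and m :: int
  shows "((\<lambda>y. F (kap N (rho1 y))) has_integral (real n * (2 * integral {0..1/2} (\<lambda>t. F (kap N t)))))
           {of_int m..of_int m + real n}"
  by (rule periodic_integral[where f="\<lambda>t. F (kap N t)"]) (rule sym_half_integral)

lemma per_integrable:
  fixes F :: "nat \<Rightarrow> real"
  shows "(\<lambda>y. F (kap N (rho1 y))) integrable_on {0..real M}"
  using per_has_integral[where F=F and N=N and m=0 and n=M] by auto

lemma kap_half: "kap N (1/2) = 0"
  by (rule kap_zero) (use Tt0_le[of N] in simp)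

lemma rho1_big_kap:
  assumes "rho1 y \<ge> 3/8" shows "kap N (rho1 y) = 0"
  by (rule kap_zero) (use Tt0_le[of N] assms in simp)

lemma Ar_core:
  fixes a b r :: real
  assumes ab: "a < b" and r: "r > 2"
  shows "(integral {a..b} (Wt N M) / (b - a)) *
         (integral {a..b} (\<lambda>y. Wt N M y powr (- 1 / (r - 1))) / (b - a)) powr (r - 1) \<le> Cfun r"
proof -
  define s where "s = 1 / (r - 1)"
  define p where "p = 2 powr s"
  define q where "q = p / 2"
  define CL where "CL = CLf r"
  have s: "0 < s" "s < 1" using r unfolding s_def by (auto simp: divide_simps)
  have p1: "1 < p" using s p_def by simp
  have p2: "p < 2" using s p_def powr_less_mono[of s 1 2] by simp
  have q0: "0 < q" "q < 1" using p1 p2 q_def by auto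
  have CLdef: "CL = 1 + 2 / (1 - q)" unfolding CL_def CLf_def q_def p_def s_def by simp
  have CL1: "CL \<ge> 1" using CLdef q0 by simp
  have r1: "r > 1" using r by simp
  let ?W = "Wt N M"
  let ?V = "\<lambda>y. Wt N M y powr (- 1 / (r - 1))"
  have Vform: "?V y = (if y \<in> {0..real M} then p ^ kap N (rho1 y) else 1)" for y
  proof -
    have e: "- 1 / (r - 1) = - (1 / (r - 1))" by simp
    show ?thesis
    proof (cases "y \<in> {0..real M}")
      case True
      then have "?V y = ((1/2::real) ^ kap N (rho1 y)) powr (- (1 / (r - 1)))"
        unfolding Wt_def e by simp
      also have "\<dots> = p ^ kap N (rho1 y)" unfolding p_def s_def by (rule half_pow_powr[OF r1])
      finally show ?thesis using True by simp
    next
      case False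
      then have "Wt N M y = 1" unfolding Wt_def by (simp only: if_False)
      then have "?V y = 1" by simp
      moreover have "(if y \<in> {0..real M} then p ^ kap N (rho1 y) else 1) = 1"
        using False by (simp only: if_False)
      ultimately show ?thesis by simp
    qed
  qed
  have Wle1: "?W y \<le> 1" for y unfolding Wt_def by (auto simp: power_le_one)
  have W0: "0 \<le> ?W y" for y unfolding Wt_def by auto
  have V0: "0 \<le> ?V y" for y by simp
  have Vge1: "?V y \<ge> 1" for y unfolding Vform using p1 by (auto simp: one_le_power)
  have iW: "?W integrable_on {a'..b'}" for a' b'
    unfolding Wt_def by (rule integrable_ext[OF per_integrable]) simp
  have iV: "?V integrable_on {a'..b'}" for a' b'
    unfolding Vform by (rule integrable_ext[OF per_integrable]) simp
  have iVp: "(\<lambda>y. p ^ kap N (rho1 y)) integrable_on {of_int m..of_int m + real n}" for m :: int and n :: nat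
    using per_has_integral[where F="\<lambda>k. p ^ k" and N=N and m=m and n=n] by auto
  have Lb: "integral {0..\<rho>} (\<lambda>t. p ^ kap N t) \<le> CL * \<rho> * p ^ kap N \<rho>" if "0 \<le> \<rho>" for \<rho>
    by (rule lemma_L[OF s p_def q_def CLdef that])
  have CLle: "(4 * CL) powr (r - 1) \<le> (17 * CL) powr (r - 1)"
    by (rule powr_mono2) (use r CL1 in auto)
  have Cge: "2 \<le> Cfun r" "(17 * CL) powr (r - 1) \<le> Cfun r" unfolding Cfun_def CL_def by auto
  define l where "l = b - a"
  have l0: "l > 0" using ab l_def by simp
  show ?thesis
  proof (cases "l \<ge> 1/8")
    case True
    define m where "m = \<lfloor>a\<rfloor>"
    define n where "n = nat (\<lceil>b\<rceil> - \<lfloor>a\<rfloor>)"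
    have fc: "\<lfloor>a\<rfloor> \<le> \<lceil>b\<rceil>" using ab by linarith
    have mn: "real_of_int m + real n = of_int \<lceil>b\<rceil>" unfolding m_def n_def using fc
      by simp
    have sub: "{a..b} \<subseteq> {of_int m..of_int m + real n}"
    proof (rule subsetI)
      fix y assume y: "y \<in> {a..b}"
      have "real_of_int \<lfloor>a\<rfloor> \<le> y" "y \<le> real_of_int \<lceil>b\<rceil>" using y by auto linarith+
      moreover have "real_of_int m + real n = of_int \<lceil>b\<rceil>" "m = \<lfloor>a\<rfloor>" using mn m_def by auto
      ultimately show "y \<in> {of_int m..of_int m + real n}" by simp
    qed
    have nle: "real n \<le> 17 * l"
    proof -
      have "real n = of_int \<lceil>b\<rceil> - of_int \<lfloor>a\<rfloor>" using mn m_def by simp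
      also have "\<dots> \<le> (b + 1) - (a - 1)" by (intro diff_mono) linarith+
      finally show ?thesis using True l_def by simp
    qed
    have I: "integral {0..1/2} (\<lambda>t. p ^ kap N t) \<le> CL * (1/2)"
      using Lb[of "1/2"] kap_half[of N] by simp
    have iVab: "(\<lambda>y. p ^ kap N (rho1 y)) integrable_on {a..b}"
      by (rule integrable_subinterval_real[OF iVp sub])
    have "integral {a..b} ?V \<le> integral {a..b} (\<lambda>y. p ^ kap N (rho1 y))"
    proof (rule integral_le[OF iV iVab])
      fix y
      have "1 \<le> p ^ kap N (rho1 y)" using p1 by (simp add: one_le_power)
      then show "?V y \<le> p ^ kap N (rho1 y)" unfolding Vform by simp
    qed
    also have "\<dots> \<le> integral {of_int m..of_int m + real n} (\<lambda>y. p ^ kap N (rho1 y))"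
      by (rule integral_subset_le[OF sub iVab iVp]) (use p1 in simp)
    also have "\<dots> = real n * (2 * integral {0..1/2} (\<lambda>t. p ^ kap N t))"
      using per_has_integral[where F="\<lambda>k. p ^ k" and N=N and m=m and n=n] by (simp add: integral_unique)
    also have "\<dots> \<le> real n * CL" using I by (intro mult_left_mono) auto
    also have "\<dots> \<le> (17 * l) * CL" using nle CL1 by (intro mult_right_mono) auto
    also have "(17 * l) * CL = (b - a) * (17 * CL)" unfolding l_def by simp
    finally have VB: "integral {a..b} ?V \<le> (b - a) * (17 * CL)" .
    have "(integral {a..b} ?W / (b - a)) * (integral {a..b} ?V / (b - a)) powr (r - 1) \<le> 1 * (17 * CL) powr (r - 1)"
      by (rule generic_bound[OF ab r1 iW iV W0 Wle1 V0 VB])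
    then show ?thesis using Cge by simp
  next
    case False
    then have l8: "l < 1/8" by simp
    define n0 where "n0 = \<lfloor>a\<rfloor>"
    have an0: "of_int n0 \<le> a" "a < of_int n0 + 1" unfolding n0_def by linarith+
    show ?thesis
    proof (cases "b > of_int n0 + 1 \<or> n0 < 0 \<or> n0 \<ge> int M")
      case True
      have W1: "?W y = 1" if y: "y \<in> {a..b}" for y
      proof (cases "b > of_int n0 + 1")
        case True
        have "rho1 y \<ge> 3/8"
        proof (cases "y \<le> of_int n0 + 1")
          case True
          then have "rho1 y = \<bar>y - of_int n0 - 1/2\<bar>" using rho1_cell[of n0 y] y an0 by auto
          moreover have "y - of_int n0 \<ge> 7/8" using \<open>b > of_int n0 + 1\<close> y l8 l_def by auto
          ultimately show ?thesis by simp
        next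
          case False
          then have "rho1 y = \<bar>y - of_int (n0+1) - 1/2\<bar>" using rho1_cell[of "n0+1" y] y l8 l_def an0 by auto
          moreover have "y - of_int n0 - 1 \<le> 1/8" using y l8 l_def an0 by auto
          moreover have "y - of_int n0 - 1 \<ge> 0" using False by simp
          ultimately show ?thesis by simp
        qed
        then show ?thesis unfolding Wt_def using rho1_big_kap[of y N] by simp
      next
        case False
        then have bn: "b \<le> of_int n0 + 1" by simp
        have "n0 < 0 \<or> n0 \<ge> int M" using True False by simp
        show ?thesis
        proof (cases "y \<in> {0..real M}")
          case True
          have "y = 0 \<or> y = real M"
          proof (cases "n0 < 0")
            case True
            then have "of_int n0 + 1 \<le> (0::real)" by linarith
            then show ?thesis using \<open>y \<in> {0..real M}\<close> y bn by auto
          next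
            case False
            then have "n0 \<ge> int M" using \<open>n0 < 0 \<or> n0 \<ge> int M\<close> by simp
            then have "real M \<le> of_int n0" by linarith
            then show ?thesis using \<open>y \<in> {0..real M}\<close> y an0 by auto
          qed
          then have h: "rho1 y = 1/2" using rho1_int[of 0] rho1_int[of "int M"] by auto
          have "kap N (rho1 y) = 0" by (subst h) (rule kap_half)
          then show ?thesis unfolding Wt_def by simp
        next
          case False
          then show ?thesis unfolding Wt_def by (simp only: if_False)
        qed
      qed
      have V1: "?V y = 1" if "y \<in> {a..b}" for y using W1[OF that] by simp
      have VB: "integral {a..b} ?V \<le> (b - a) * 1"
        using integral_cong[of "{a..b}" ?V "\<lambda>y. 1"] V1 ab by simp
      have "(integral {a..b} ?W / (b - a)) * (integral {a..b} ?V / (b - a)) powr (r - 1) \<le> 1 * 1 powr (r - 1)"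
        by (rule generic_bound[OF ab r1 iW iV W0 _ V0 VB]) (use W1 in simp)
      then show ?thesis using Cge by simp
    next
      case False
      then have bn: "b \<le> of_int n0 + 1" and n0pos: "0 \<le> n0" and n0M: "n0 + 1 \<le> int M" by auto
      define c :: real where "c = of_int n0 + 1/2"
      have n0r: "0 \<le> real_of_int n0" "real_of_int n0 + 1 \<le> real M" using n0pos n0M by linarith+
      have cell: "y \<in> {of_int n0..of_int n0 + 1} \<Longrightarrow> y \<in> {0..real M}" for y
        using n0r by auto
      have Wc: "?W y = (1/2) ^ kap N \<bar>y - c\<bar>" if "y \<in> {of_int n0..of_int n0 + 1}" for y
        using cell[OF that] rho1_cell[of n0 y] that unfolding Wt_def c_def by (auto simp: algebra_simps)
      have Vc: "?V y = p ^ kap N \<bar>y - c\<bar>" if "y \<in> {of_int n0..of_int n0 + 1}" for y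
        using cell[OF that] rho1_cell[of n0 y] that unfolding Vform c_def by (auto simp: algebra_simps)
      have abcell: "y \<in> {of_int n0..of_int n0 + 1}" if "y \<in> {a..b}" for y using that an0 bn by auto
      have B1: "?thesis" if d0: "0 \<le> d" and dy: "\<And>y. y \<in> {a..b} \<Longrightarrow> d \<le> \<bar>y - c\<bar> \<and> \<bar>y - c\<bar> \<le> 2 * d" for d
      proof -
        define kd where "kd = kap N d"
        have WA: "?W y \<le> 2 * (1/2) ^ kd" if y: "y \<in> {a..b}" for y
        proof -
          have "kap N (2 * d) \<le> kap N \<bar>y - c\<bar>" using dy[OF y] by (intro kap_mono) simp
          moreover have "kd \<le> kap N (2 * d) + 1" unfolding kd_def by (rule kap_double[OF d0])
          ultimately have "kd \<le> kap N \<bar>y - c\<bar> + 1" by simp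
          then have "(1/2::real) ^ (kap N \<bar>y - c\<bar> + 1) \<le> (1/2) ^ kd" by (intro power_decreasing) auto
          then show ?thesis using Wc[OF abcell[OF y]] by simp
        qed
        have VA: "?V y \<le> p ^ kd" if y: "y \<in> {a..b}" for y
        proof -
          have "kap N \<bar>y - c\<bar> \<le> kd" unfolding kd_def using dy[OF y] by (intro kap_mono) simp
          then show ?thesis using Vc[OF abcell[OF y]] p1 by (simp add: power_increasing)
        qed
        have VB: "integral {a..b} ?V \<le> (b - a) * p ^ kd"
          using integral_le[OF iV integrable_const_ivl VA, of a b] ab by (simp add: mult.commute)
        have "(integral {a..b} ?W / (b - a)) * (integral {a..b} ?V / (b - a)) powr (r - 1) \<le> (2 * (1/2) ^ kd) * (p ^ kd) powr (r - 1)"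
          by (rule generic_bound[OF ab r1 iW iV W0 WA V0 VB])
        also have "(p ^ kd) powr (r - 1) = 2 ^ kd" unfolding p_def s_def by (rule p_pow_powr[OF r1])
        finally show ?thesis using Cge by (simp add: power_one_over)
      qed
      show ?thesis
      proof (cases "(c \<le> a \<and> l \<le> a - c) \<or> (b \<le> c \<and> l \<le> c - b)")
        case True
        then show ?thesis
        proof
          assume h: "c \<le> a \<and> l \<le> a - c"
          show ?thesis by (rule B1[of "a - c"]) (use h l_def in auto)
        next
          assume h: "b \<le> c \<and> l \<le> c - b"
          show ?thesis by (rule B1[of "c - b"]) (use h l_def in auto)
        qed
      next
        case False
        define D where "D = 2 * l"
        have D0: "0 \<le> D" using l0 D_def by simp
        have yD: "\<bar>y - c\<bar> \<le> D" if "y \<in> {a..b}" for y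
          using False that l_def D_def by auto
        have Dcell: "{c - D..c + D} \<subseteq> {of_int n0..of_int n0 + 1}"
          using l8 D_def c_def by auto
        have abD: "{a..b} \<subseteq> {c - D..c + D}"
        proof (rule subsetI)
          fix y assume "y \<in> {a..b}"
          then have "\<bar>y - c\<bar> \<le> D" by (rule yD)
          then show "y \<in> {c - D..c + D}" by (simp add: abs_le_iff)
        qed
        define kD where "kD = kap N D"
        have WA: "?W y \<le> (1/2) ^ kD" if y: "y \<in> {a..b}" for y
        proof -
          have "kD \<le> kap N \<bar>y - c\<bar>" unfolding kD_def using yD[OF y] by (intro kap_mono) simp
          then have "(1/2::real) ^ kap N \<bar>y - c\<bar> \<le> (1/2) ^ kD" by (intro power_decreasing) auto
          then show ?thesis using Wc[OF abcell[OF y]] by simp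
        qed
        have symI: "((\<lambda>y. p ^ kap N \<bar>y - c\<bar>) has_integral 2 * integral {0..D} (\<lambda>t. p ^ kap N t)) {c - D..c + D}"
          by (rule has_integral_sym[OF _ D0]) (use kap_integrable in auto)
        have "integral {a..b} ?V \<le> integral {c - D..c + D} ?V"
          by (rule integral_subset_le[OF abD iV iV]) simp
        also have "\<dots> = integral {c - D..c + D} (\<lambda>y. p ^ kap N \<bar>y - c\<bar>)"
          by (rule integral_cong) (use Vc Dcell in auto)
        also have "\<dots> = 2 * integral {0..D} (\<lambda>t. p ^ kap N t)" using symI by (simp add: integral_unique)
        also have "\<dots> \<le> 2 * (CL * D * p ^ kD)" unfolding kD_def using Lb[OF D0] by simp
        finally have VB: "integral {a..b} ?V \<le> (b - a) * (4 * CL * p ^ kD)"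
          unfolding D_def l_def by (simp add: algebra_simps)
        have "(integral {a..b} ?W / (b - a)) * (integral {a..b} ?V / (b - a)) powr (r - 1) \<le> (1/2) ^ kD * (4 * CL * p ^ kD) powr (r - 1)"
          by (rule generic_bound[OF ab r1 iW iV W0 WA V0 VB])
        also have "(4 * CL * p ^ kD) powr (r - 1) = (4 * CL) powr (r - 1) * 2 ^ kD"
          using p_pow_powr[OF r1, of kD] unfolding p_def s_def by (simp add: powr_mult)
        finally have "(integral {a..b} ?W / (b - a)) * (integral {a..b} ?V / (b - a)) powr (r - 1) \<le> (4 * CL) powr (r - 1)"
          by (simp add: power_one_over)
        then show ?thesis using CLle Cge by linarith
      qed
    qed
  qed
qed

definition lvl :: "nat \<Rightarrow> nat \<Rightarrow> real \<Rightarrow> nat" where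
  "lvl N M x = kap N (rho1 (real M * x))"
definition sig :: "nat \<Rightarrow> nat \<Rightarrow> real" where
  "sig N j = (if j = 0 then b_seq N else - (2 ^ j))"
definition gg :: "nat \<Rightarrow> nat \<Rightarrow> real \<Rightarrow> real" where
  "gg N M x = sig N (lvl N M x)"
definition uu :: "nat \<Rightarrow> nat \<Rightarrow> real \<Rightarrow> real" where
  "uu N M x = integral {0..x} (gg N M)"

lemma sum_S_le: "(\<Sum>k=1..N. 1 / (real k * 2 ^ k)) \<le> 1"
proof -
  have "(\<Sum>k=1..N. 1 / (real k * 2 ^ k)) \<le> (\<Sum>k\<in>{0<..N}. (1/2::real) ^ k)"
  proof -
    have e: "{1..N} = {0<..N}" by auto
    show ?thesis unfolding e
    proof (rule sum_mono)
      fix k assume "k \<in> {0<..N}"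
      then have "real k * 2^k \<ge> 2^k" by simp
      then have "1 / (real k * 2 ^ k) \<le> 1 / 2^k" by (intro divide_left_mono) auto
      then show "1 / (real k * 2 ^ k) \<le> (1/2) ^ k" by (simp add: power_one_over)
    qed
  qed
  also have "\<dots> \<le> 1" using geom_half[of 0 N] by simp
  finally show ?thesis .
qed

lemma sig_zero: "integral {0..1/2} (\<lambda>t. sig N (kap N t)) = 0"
proof -
  have T: "Tt N 0 \<le> 1/2" using Tt0_le[of N] by simp
  have "integral {0..1/2} (\<lambda>t. sig N (kap N t)) = (\<Sum>j\<in>{0<..N}. sig N j * (mu_seq j / 2)) + sig N 0 * (1/2 - Tt N 0)"
    using kap_integral_full[OF T, of "sig N"] by (simp add: integral_unique)
  also have "(\<Sum>j\<in>{0<..N}. sig N j * (mu_seq j / 2)) = - (\<Sum>k=1..N. 1 / real k) / 4"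
  proof -
    have e: "{1..N} = {0<..N}" by auto
    have "(\<Sum>j\<in>{0<..N}. sig N j * (mu_seq j / 2)) = (\<Sum>j\<in>{0<..N}. - (1 / real j) / 4)"
      by (rule sum.cong) (auto simp: sig_def mu_seq_def)
    also have "\<dots> = - (\<Sum>k\<in>{0<..N}. 1 / real k) / 4" by (simp add: sum_negf sum_divide_distrib)
    finally show ?thesis unfolding e .
  qed
  also have "sig N 0 * (1/2 - Tt N 0) = b_seq N * beta_seq N / 2"
  proof -
    have e: "{1..N} = {0<..N}" by auto
    show ?thesis unfolding sig_def beta_seq_def Tt_def e by (simp add: algebra_simps)
  qed
  also have "b_seq N * beta_seq N = (\<Sum>k=1..N. 1 / real k) / 2"
  proof -
    define H where "H = (\<Sum>k=1..N. 1 / real k)"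
    define S where "S = (\<Sum>k=1..N. 1 / (real k * 2 ^ k))"
    have S1: "S \<le> 1" unfolding S_def by (rule sum_S_le)
    have "(\<Sum>k=1..N. mu_seq k) = (\<Sum>k=1..N. (1 / (real k * 2 ^ k)) / 2)"
      by (rule sum.cong) (simp_all add: mu_seq_def)
    also have "\<dots> = S / 2" unfolding S_def by (simp add: sum_divide_distrib)
    finally have "(\<Sum>k=1..N. mu_seq k) = S / 2" .
    then have "beta_seq N = (2 - S) / 2" unfolding beta_seq_def by simp
    moreover have "b_seq N = H / (2 - S)" unfolding b_seq_def H_def S_def by simp
    moreover have "2 - S \<noteq> 0" using S1 by simp
    ultimately have "b_seq N * beta_seq N = (H / (2 - S)) * ((2 - S) / 2)" by (simp only:)
    also have "\<dots> = H / 2" using \<open>2 - S \<noteq> 0\<close> by simp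
    finally show ?thesis unfolding H_def .
  qed
  finally show ?thesis by simp
qed

lemma gg_has_int:
  assumes M: "M \<ge> 1"
  shows "(gg N M has_integral 0) {0..real n / real M}"
proof -
  have h: "((\<lambda>y. sig N (kap N (rho1 y))) has_integral 0) {real M * 0..real M * (real n / real M)}"
    using per_has_integral[where F="sig N" and N=N and m=0 and n=n] sig_zero[of N] M by simp
  have "((\<lambda>x. sig N (kap N (rho1 (real M * x)))) has_integral 0 / real M) {0..real n / real M}"
    by (rule has_integral_scale_real[OF h]) (use M in simp)
  then show ?thesis unfolding gg_def lvl_def by simp
qed

lemma gg_integrable:
  assumes M: "M \<ge> 1" and "0 \<le> x" "y \<le> 1"
  shows "gg N M integrable_on {x..y}"
proof -
  have "gg N M integrable_on {0..real M / real M}" using gg_has_int[OF M, of N M] by auto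
  then have "gg N M integrable_on {0..1}" using M by simp
  then show ?thesis by (rule integrable_subinterval_real) (use assms in auto)
qed

lemma uu_affine:
  assumes M: "M \<ge> 1" and xy: "0 \<le> x1" "x1 \<le> y1" "y1 \<le> 1"
    and c: "\<And>t. x1 < t \<Longrightarrow> t < y1 \<Longrightarrow> gg N M t = m"
    and t: "t \<in> {x1..y1}"
  shows "uu N M t = uu N M x1 + m * (t - x1)"
proof -
  have "integral {0..t} (gg N M) = integral {0..x1} (gg N M) + integral {x1..t} (gg N M)"
    by (rule Henstock_Kurzweil_Integration.integral_combine[symmetric])
       (use xy t gg_integrable[OF M] in auto)
  moreover have "(gg N M has_integral m * (t - x1)) {x1..t}"
    by (rule has_integral_const_open) (use t c in auto)
  ultimately show ?thesis unfolding uu_def by (simp add: integral_unique)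
qed

lemma uu_zero: "uu N M 0 = 0" unfolding uu_def by simp

lemma uu_one: assumes "M \<ge> 1" shows "uu N M 1 = 0"
  using gg_has_int[OF assms, of N M] assms unfolding uu_def by (simp add: integral_unique)

lemma sig_bound: assumes "j \<le> N" shows "\<bar>sig N j\<bar> \<le> \<bar>b_seq N\<bar> + 2 ^ N"
proof -
  have h: "(2::real)^j \<le> 2^N" using assms by (rule power_increasing) simp
  have h2: "\<bar>b_seq N\<bar> \<ge> 0" by simp
  show ?thesis
  proof (cases "j = 0")
    case True
    have "(0::real) \<le> 2^N" by simp
    then show ?thesis using True unfolding sig_def by simp
  next
    case False
    then have "\<bar>sig N j\<bar> = 2^j" unfolding sig_def by simp
    then show ?thesis using h h2 by linarith
  qed
qed

lemma uu_small:
  assumes M: "M \<ge> 1" and x: "x \<in> {0..1}"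
  shows "\<bar>uu N M x\<bar> \<le> (\<bar>b_seq N\<bar> + 2 ^ N) / real M"
proof -
  define B where "B = \<bar>b_seq N\<bar> + 2 ^ N"
  define n where "n = nat \<lfloor>real M * x\<rfloor>"
  have Mx: "0 \<le> real M * x" using x by simp
  have n1: "real n \<le> real M * x" "real M * x < real n + 1" unfolding n_def using Mx by linarith+
  define x0 where "x0 = real n / real M"
  have Mpos: "real M > 0" using M by simp
  have xd: "x - x0 = (real M * x - real n) / real M" unfolding x0_def using Mpos by (simp add: field_simps)
  have d1: "0 \<le> (real M * x - real n) / real M" using n1 Mpos by simp
  have d2: "(real M * x - real n) / real M \<le> 1 / real M" using n1 Mpos by (intro divide_right_mono) auto
  have x0: "0 \<le> x0" "x0 \<le> x" "x - x0 \<le> 1 / real M"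
    using xd d1 d2 unfolding x0_def by auto
  have "uu N M x = integral {0..x0} (gg N M) + integral {x0..x} (gg N M)"
    unfolding uu_def
    by (rule Henstock_Kurzweil_Integration.integral_combine[symmetric])
       (use x0 x gg_integrable[OF M] in auto)
  also have "integral {0..x0} (gg N M) = 0" unfolding x0_def using gg_has_int[OF M] by (simp add: integral_unique)
  finally have ux: "uu N M x = integral {x0..x} (gg N M)" by simp
  have gb: "\<bar>gg N M t\<bar> \<le> B" for t unfolding gg_def B_def by (rule sig_bound) (simp add: lvl_def kap_le)
  have gb2: "- B \<le> gg N M t" "gg N M t \<le> B" for t using gb[of t] by auto
  have i: "gg N M integrable_on {x0..x}" using gg_integrable[OF M] x0 x by auto
  have "integral {x0..x} (gg N M) \<le> integral {x0..x} (\<lambda>t. B)"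
    by (rule integral_le[OF i]) (use gb2 in auto)
  moreover have "integral {x0..x} (\<lambda>t. - B) \<le> integral {x0..x} (gg N M)"
    by (rule integral_le[OF _ i]) (use gb2 in auto)
  ultimately have "\<bar>uu N M x\<bar> \<le> B * (x - x0)" using ux x0 by (simp add: abs_le_iff algebra_simps)
  also have "\<dots> \<le> B * (1 / real M)" using x0 by (intro mult_left_mono) (auto simp: B_def)
  finally show ?thesis unfolding B_def by simp
qed

definition OG :: "nat \<Rightarrow> nat \<Rightarrow> nat \<Rightarrow> real set" where
  "OG N M k = {x. 0 < x \<and> x < 1 \<and> Tt N k < rho1 (real M * x) \<and> rho1 (real M * x) < Tt N (k-1)}"
definition OB :: "nat \<Rightarrow> nat \<Rightarrow> real set" where
  "OB N M = {x. 0 < x \<and> x < 1 \<and> Tt N 0 < rho1 (real M * x)}"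
definition NS :: "nat \<Rightarrow> nat \<Rightarrow> real set" where
  "NS N M = {0,1} \<union> {x \<in> {0..1}. \<exists>j\<in>{0..N}. rho1 (real M * x) = Tt N j}"

lemma cont_f: "continuous_on UNIV (\<lambda>x. rho1 (real M * x))"
  by (rule continuous_on_compose2[OF continuous_rho1]) (auto intro: continuous_intros)

lemma isCont_f: "isCont (\<lambda>x. rho1 (real M * x)) x"
  using cont_f by (simp add: continuous_on_eq_continuous_at)

lemma OG_open: "open (OG N M k)"
  unfolding OG_def
  by (intro open_Collect_conj open_Collect_less cont_f continuous_intros)

lemma OB_open: "open (OB N M)"
  unfolding OB_def
  by (intro open_Collect_conj open_Collect_less cont_f continuous_intros)

lemma NS_finite:
  assumes M: "M \<ge> 1"
  shows "finite (NS N M)"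
proof -
  define Z where "Z = {x \<in> {0..1}. \<exists>j\<in>{0..N}. rho1 (real M * x) = Tt N j}"
  define g where "g = (\<lambda>(n::nat, j::nat, \<sigma>::real). (real n + 1/2 + \<sigma> * Tt N j) / real M)"
  have "Z \<subseteq> g ` ({0..M} \<times> {0..N} \<times> {-1,1})"
  proof
    fix x assume "x \<in> Z"
    then obtain j where x: "x \<in> {0..1}" and j: "j \<in> {0..N}" and e: "rho1 (real M * x) = Tt N j"
      unfolding Z_def by auto
    define y where "y = real M * x"
    have y: "0 \<le> y" "y \<le> real M" using x unfolding y_def by (auto simp: mult_left_le)
    define n where "n = nat \<lfloor>y\<rfloor>"
    have n: "real n \<le> y" "y \<le> real n + 1" unfolding n_def using y by linarith+
    have nM: "n \<le> M" unfolding n_def using y by (simp add: nat_le_iff floor_le_iff)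
    have "rho1 y = \<bar>y - real n - 1/2\<bar>" using rho1_cell[of "int n" y] n by simp
    then have "\<bar>y - real n - 1/2\<bar> = Tt N j" using e y_def by simp
    then have "y = real n + 1/2 + 1 * Tt N j \<or> y = real n + 1/2 + (-1) * Tt N j" by arith
    then obtain \<sigma> :: real where s: "\<sigma> \<in> {-1,1}" "y = real n + 1/2 + \<sigma> * Tt N j"
      by blast
    have "x = g (n, j, \<sigma>)" unfolding g_def using s(2) y_def M by (simp add: field_simps)
    then show "x \<in> g ` ({0..M} \<times> {0..N} \<times> {-1,1})" using nM j s(1) by force
  qed
  then have "finite Z" by (rule finite_subset) auto
  then show ?thesis unfolding NS_def Z_def by simp
qed

lemma NS_null: "M \<ge> 1 \<Longrightarrow> NS N M \<in> null_sets lebesgue"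
  using NS_finite negligible_finite negligible_iff_null_sets by blast

lemma NS_sub: "NS N M \<subseteq> {0..1}" unfolding NS_def by auto

lemma kap_lt_not:
  assumes M: "M \<ge> 1" and xy: "0 \<le> x1" "y1 \<le> 1"
    and noS: "\<And>t. x1 < t \<Longrightarrow> t < y1 \<Longrightarrow> t \<notin> NS N M"
    and t1: "x1 < t1" "t1 < y1" and t2: "x1 < t2" "t2 < y1"
  shows "\<not> lvl N M t1 < lvl N M t2"
proof
  assume lt: "lvl N M t1 < lvl N M t2"
  define f where "f = (\<lambda>x. rho1 (real M * x))"
  define j where "j = lvl N M t2"
  have j1: "1 \<le> j" using lt j_def by simp
  have jN: "j \<le> N" unfolding j_def lvl_def by (rule kap_le)
  have B: "f t2 < Tt N (j - 1)" using kap_lt_T[of N "f t2"] j1 unfolding j_def lvl_def f_def by simp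
  have A: "\<not> f t1 < Tt N (j - 1)" using kap_char[of j N "f t1"] j1 jN lt unfolding j_def lvl_def f_def by simp
  have cont: "\<forall>x. isCont f x" unfolding f_def using isCont_f by simp
  obtain t where t: "min t1 t2 \<le> t" "t \<le> max t1 t2" "f t = Tt N (j - 1)"
  proof (cases "t1 \<le> t2")
    case True
    obtain t where "t1 \<le> t" "t \<le> t2" "f t = Tt N (j - 1)"
      using IVT2[of f t2 "Tt N (j-1)" t1] A B True cont by auto
    then show ?thesis using that True by auto
  next
    case False
    obtain t where "t2 \<le> t" "t \<le> t1" "f t = Tt N (j - 1)"
      using IVT[of f t2 "Tt N (j-1)" t1] A B False cont by auto
    then show ?thesis using that False by auto
  qed
  have "x1 < t" "t < y1" using t t1 t2 by auto
  then have "t \<in> NS N M" unfolding NS_def using t(3) xy jN unfolding f_def by auto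
  then show False using noS \<open>x1 < t\<close> \<open>t < y1\<close> by blast
qed

lemma lvl_const:
  assumes M: "M \<ge> 1" and xy: "0 \<le> x1" "y1 \<le> 1"
    and noS: "\<And>t. x1 < t \<Longrightarrow> t < y1 \<Longrightarrow> t \<notin> NS N M"
    and t1: "x1 < t1" "t1 < y1" and t2: "x1 < t2" "t2 < y1"
  shows "lvl N M t1 = lvl N M t2"
  using kap_lt_not[OF M xy noS t1 t2] kap_lt_not[OF M xy noS t2 t1] by simp

lemma cover:
  assumes N: "N \<ge> 1"
  shows "{0..1} = (\<Union>k\<in>{1..N}. OG N M k) \<union> OB N M \<union> NS N M"
proof
  show "(\<Union>k\<in>{1..N}. OG N M k) \<union> OB N M \<union> NS N M \<subseteq> {0..1}"
    unfolding OG_def OB_def NS_def by auto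
next
  show "{0..1} \<subseteq> (\<Union>k\<in>{1..N}. OG N M k) \<union> OB N M \<union> NS N M"
  proof
    fix x :: real assume x: "x \<in> {0..1}"
    show "x \<in> (\<Union>k\<in>{1..N}. OG N M k) \<union> OB N M \<union> NS N M"
    proof (cases "x \<in> NS N M")
      case True then show ?thesis by simp
    next
      case False
      define t where "t = rho1 (real M * x)"
      have x01: "0 < x" "x < 1" using False x unfolding NS_def by auto
      have tT: "t \<noteq> Tt N j" if "j \<le> N" for j using False x that unfolding NS_def t_def by auto
      show ?thesis
      proof (cases "Tt N 0 < t")
        case True
        then have "x \<in> OB N M" unfolding OB_def t_def using x01 by simp
        then show ?thesis by simp
      next
        case False
        then have t0: "t < Tt N 0" using tT[of 0] by simp
        define k where "k = kap N t"
        have k1: "1 \<le> k" unfolding k_def using kap_ge[of 1 N t] N t0 by simp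
        have kN: "k \<le> N" unfolding k_def by (rule kap_le)
        have up: "t < Tt N (k - 1)" unfolding k_def using kap_lt_T[of N t] k1 k_def by simp
        have lo: "Tt N k < t"
        proof (cases "k < N")
          case True
          then have "Tt N k \<le> t" unfolding k_def using kap_ge_T[of N t] k_def by simp
          then show ?thesis using tT[of k] kN by simp
        next
          case False
          then have "k = N" using kN by simp
          moreover have "0 \<le> t" unfolding t_def by (rule rho1_bounds)
          ultimately show ?thesis using tT[of N] Tt_N[of N] by simp
        qed
        have "x \<in> OG N M k" unfolding OG_def using x01 up lo t_def by simp
        then show ?thesis using k1 kN by auto
      qed
    qed
  qed
qed

lemma chain_integral:
  fixes f :: "real \<Rightarrow> real"
  assumes M: "M \<ge> 1" and f: "(f has_integral J) {0..1/2}"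
  shows "((\<lambda>x. f (rho1 (real M * x))) has_integral 2 * J) {0..1}"
proof -
  have s: "((\<lambda>y. f \<bar>y - 1/2\<bar>) has_integral 2 * J) {1/2 - 1/2..1/2 + 1/2}"
    by (rule has_integral_sym[OF f]) simp
  have p: "((\<lambda>y. f (rho1 y)) has_integral (real M * (2 * J))) {of_int 0..of_int 0 + real M}"
    by (rule periodic_integral) (use s in simp)
  have p': "((\<lambda>y. f (rho1 y)) has_integral (real M * (2 * J))) {real M * 0..real M * 1}"
    using p by simp
  have "((\<lambda>x. f (rho1 (real M * x))) has_integral (real M * (2 * J)) / real M) {0..1}"
    by (rule has_integral_scale_real[OF p']) (use M in simp)
  then show ?thesis using M by simp
qed

lemma measure_from_integral:
  assumes "open S" "S \<subseteq> {0..1}" "(indicator S has_integral m) {0..1::real}"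
  shows "measure lebesgue S = m"
proof -
  have "S \<in> lmeasurable"
  proof (rule lmeasurable_open)
    show "bounded S" using bounded_subset[OF compact_imp_bounded[OF compact_Icc] assms(2)] .
  qed (use assms in auto)
  moreover have "S \<inter> {0..1} = S" using assms by auto
  ultimately have "integral {0..1} (indicator S) = measure lebesgue S"
    using integral_indicator[of S "{0..1::real}"] by simp
  then show ?thesis using assms(3) by (simp add: integral_unique)
qed

lemma measure_OG:
  assumes M: "M \<ge> 1" and k: "k \<in> {1..N}"
  shows "measure lebesgue (OG N M k) = mu_seq k"
proof -
  define F where "F = (\<lambda>j::nat. if j = k then 1 else (0::real))"
  define f where "f = (\<lambda>t::real. if Tt N k < t \<and> t < Tt N (k-1) then 1 else (0::real))"
  have T: "Tt N 0 \<le> 1/2" using Tt0_le[of N] by simp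
  have h1: "((\<lambda>t. F (kap N t)) has_integral (\<Sum>j\<in>{0<..N}. F j * (mu_seq j / 2)) + F 0 * (1/2 - Tt N 0)) {0..1/2}"
    by (rule kap_integral_full[OF T])
  have e1: "(\<Sum>j\<in>{0<..N}. F j * (mu_seq j / 2)) + F 0 * (1/2 - Tt N 0) = mu_seq k / 2"
  proof -
    have "(\<Sum>j\<in>{0<..N}. F j * (mu_seq j / 2)) = (\<Sum>j\<in>{0<..N}. if j = k then mu_seq j / 2 else 0)"
      by (rule sum.cong) (auto simp: F_def)
    also have "\<dots> = mu_seq k / 2" using k by (simp add: sum.delta)
    finally show ?thesis using k unfolding F_def by simp
  qed
  have hF: "((\<lambda>t. F (kap N t)) has_integral mu_seq k / 2) {0..1/2}" using h1 e1 by (simp only:)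
  have hf: "(f has_integral mu_seq k / 2) {0..1/2}"
  proof (rule has_integral_spike_finite[where S="{Tt N k}", OF _ _ hF])
    fix t assume t: "t \<in> {0..1/2} - {Tt N k}"
    have "(Tt N k < t \<and> t < Tt N (k-1)) \<longleftrightarrow> kap N t = k"
    proof
      assume "Tt N k < t \<and> t < Tt N (k-1)"
      then show "kap N t = k" using kap_eq[of k N t] k by auto
    next
      assume kt: "kap N t = k"
      then have "t < Tt N (k-1)" using kap_lt_T[of N t] k by auto
      moreover have "Tt N k < t"
      proof (cases "k < N")
        case True
        then have "Tt N k \<le> t" using kap_ge_T[of N t] kt by simp
        then show ?thesis using t by auto
      next
        case False
        then have "k = N" using k by simp
        then show ?thesis using t Tt_N[of N] by auto
      qed
      ultimately show "Tt N k < t \<and> t < Tt N (k-1)" by simp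
    qed
    then show "f t = F (kap N t)" unfolding f_def F_def by auto
  qed simp
  have hc: "((\<lambda>x. f (rho1 (real M * x))) has_integral 2 * (mu_seq k / 2)) {0..1}"
    by (rule chain_integral[OF M hf])
  have hi: "(indicator (OG N M k) has_integral 2 * (mu_seq k / 2)) {0..1}"
  proof (rule has_integral_spike_finite[where S="{0,1}", OF _ _ hc])
    fix x :: real assume "x \<in> {0..1} - {0,1}"
    then have "0 < x" "x < 1" by auto
    then show "indicator (OG N M k) x = f (rho1 (real M * x))"
      unfolding f_def OG_def indicator_def by auto
  qed simp
  have "measure lebesgue (OG N M k) = 2 * (mu_seq k / 2)"
    by (rule measure_from_integral[OF OG_open _ hi]) (auto simp: OG_def)
  then show ?thesis by simp
qed

lemma measure_OB:
  assumes M: "M \<ge> 1" and N: "N \<ge> 1"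
  shows "measure lebesgue (OB N M) = beta_seq N"
proof -
  define F where "F = (\<lambda>j::nat. if j = 0 then 1 else (0::real))"
  define f where "f = (\<lambda>t::real. if Tt N 0 < t then 1 else (0::real))"
  have T: "Tt N 0 \<le> 1/2" using Tt0_le[of N] by simp
  have "((\<lambda>t. F (kap N t)) has_integral (\<Sum>j\<in>{0<..N}. F j * (mu_seq j / 2)) + F 0 * (1/2 - Tt N 0)) {0..1/2}"
    by (rule kap_integral_full[OF T])
  moreover have "(\<Sum>j\<in>{0<..N}. F j * (mu_seq j / 2)) + F 0 * (1/2 - Tt N 0) = 1/2 - Tt N 0"
    unfolding F_def by simp
  ultimately have hF: "((\<lambda>t. F (kap N t)) has_integral 1/2 - Tt N 0) {0..1/2}" by simp
  have hf: "(f has_integral 1/2 - Tt N 0) {0..1/2}"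
  proof (rule has_integral_spike_finite[where S="{Tt N 0}", OF _ _ hF])
    fix t assume t: "t \<in> {0..1/2} - {Tt N 0}"
    have "Tt N 0 < t \<longleftrightarrow> kap N t = 0"
    proof
      assume "Tt N 0 < t" then show "kap N t = 0" by (rule kap_zero)
    next
      assume "kap N t = 0"
      then have "\<not> t < Tt N (1 - 1)" using kap_char[of 1 N t] N by auto
      then show "Tt N 0 < t" using t by auto
    qed
    then show "f t = F (kap N t)" unfolding f_def F_def by auto
  qed simp
  have hc: "((\<lambda>x. f (rho1 (real M * x))) has_integral 2 * (1/2 - Tt N 0)) {0..1}"
    by (rule chain_integral[OF M hf])
  have hi: "(indicator (OB N M) has_integral 2 * (1/2 - Tt N 0)) {0..1}"
  proof (rule has_integral_spike_finite[where S="{0,1}", OF _ _ hc])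
    fix x :: real assume "x \<in> {0..1} - {0,1}"
    then have "0 < x" "x < 1" by auto
    then show "indicator (OB N M) x = f (rho1 (real M * x))"
      unfolding f_def OB_def indicator_def by auto
  qed simp
  have "measure lebesgue (OB N M) = 2 * (1/2 - Tt N 0)"
    by (rule measure_from_integral[OF OB_open _ hi]) (auto simp: OB_def)
  moreover have "2 * (1/2 - Tt N 0) = beta_seq N"
  proof -
    have e: "{1..N} = {0<..N}" by auto
    show ?thesis unfolding beta_seq_def Tt_def e by simp
  qed
  ultimately show ?thesis by simp
qed

definition ww :: "nat \<Rightarrow> nat \<Rightarrow> real \<Rightarrow> real" where
  "ww N M x = (1/2::real) ^ lvl N M x"

lemma affine_deriv: "((\<lambda>t. c + m * (t - a)) has_real_derivative m) (at (x::real))"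
  by (auto intro!: derivative_eq_intros)

lemma uu_deriv_local:
  assumes M: "M \<ge> 1" and S: "open S" "S \<subseteq> {0<..<1}" "x \<in> S"
    and g: "\<And>t. t \<in> S \<Longrightarrow> gg N M t = m"
  shows "(uu N M has_real_derivative m) (at x)"
proof -
  obtain e where e: "e > 0" "ball x e \<subseteq> S" using S(1) S(3) by (rule openE)
  define x1 where "x1 = x - e/2"
  define y1 where "y1 = x + e/2"
  have sub: "{x1..y1} \<subseteq> S"
  proof
    fix t assume "t \<in> {x1..y1}"
    then have "dist x t < e" using e(1) unfolding x1_def y1_def dist_real_def by auto
    then have "t \<in> ball x e" by simp
    then show "t \<in> S" using e(2) by blast
  qed
  have le: "x1 \<le> y1" unfolding x1_def y1_def using e(1) by simp
  have "x1 \<in> S" "y1 \<in> S" using sub le by auto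
  then have "x1 \<in> {0<..<1}" "y1 \<in> {0<..<1}" using S(2) by auto
  then have x1y1: "0 \<le> x1" "x1 \<le> y1" "y1 \<le> 1" using le by auto
  have aff: "uu N M t = uu N M x1 + m * (t - x1)" if "t \<in> {x1..y1}" for t
  proof (rule uu_affine[OF M x1y1 _ that])
    fix s assume "x1 < s" "s < y1"
    then have "s \<in> S" using sub by auto
    then show "gg N M s = m" by (rule g)
  qed
  have d: "((\<lambda>t. uu N M x1 + m * (t - x1)) has_real_derivative m) (at x)"
    by (rule affine_deriv)
  show ?thesis
  proof (rule has_field_derivative_transform_within_open[OF d])
    show "open {x1<..<y1}" by simp
    show "x \<in> {x1<..<y1}" using e(1) by (simp add: x1_def y1_def)
    fix z assume "z \<in> {x1<..<y1}"
    then have "z \<in> {x1..y1}" by simp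
    then have "uu N M z = uu N M x1 + m * (z - x1)" by (rule aff)
    then show "uu N M x1 + m * (z - x1) = uu N M z" by (rule sym)
  qed
qed

lemma Wt_gen_integrable:
  fixes F :: "nat \<Rightarrow> real"
  shows "(\<lambda>y. if y \<in> {0..real M} then F (kap N (rho1 y)) else 1) integrable_on {a..b}"
  by (rule integrable_ext[OF per_integrable]) simp

lemma avg_scale:
  fixes h :: "real \<Rightarrow> real"
  assumes M: "M > 0" and h: "h integrable_on {M*a..M*b}" and ab: "a < b"
  shows "integral {a..b} (\<lambda>x. h (M*x)) / (b - a) = integral {M*a..M*b} h / (M*b - M*a)"
proof -
  have "((\<lambda>x. h (M*x)) has_integral integral {M*a..M*b} h / M) {a..b}"
    by (rule has_integral_scale_real[OF _ M]) (use h in auto)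
  then have "integral {a..b} (\<lambda>x. h (M*x)) = integral {M*a..M*b} h / M" by (simp add: integral_unique)
  moreover have "M*b - M*a = M * (b - a)" by (simp add: algebra_simps)
  ultimately show ?thesis by (simp add: divide_divide_eq_left)
qed

theorem proposition2p3:
  "\<exists>C :: real \<Rightarrow> real. \<forall>(N::nat) (\<delta>::real). N \<ge> 1 \<and> \<delta> > 0 \<longrightarrow>
     (\<exists>(OmB :: real set) (OmG :: nat \<Rightarrow> real set) (Nul :: real set)
        (u :: real \<Rightarrow> real) (w :: real \<Rightarrow> real).
        open OmB \<and> OmB \<subseteq> {0..1} \<and>
        (\<forall>k\<in>{1..N}. open (OmG k) \<and> OmG k \<subseteq> {0..1}) \<and>
        Nul \<in> null_sets lebesgue \<and>
        {0..1} = (\<Union>k\<in>{1..N}. OmG k) \<union> OmB \<union> Nul \<and>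
        piecewise_affine_on 0 1 u \<and> u 0 = 0 \<and> u 1 = 0 \<and>
        (\<forall>x\<in>{0..1}. \<bar>u x\<bar> \<le> \<delta>) \<and>
        piecewise_constant_on 0 1 w \<and> (\<forall>x\<in>{0..1}. w x > 0) \<and>
        measure lebesgue OmB = beta_seq N \<and>
        (\<forall>k\<in>{1..N}. measure lebesgue (OmG k) = mu_seq k) \<and>
        (\<forall>k\<in>{1..N}. AE x in lebesgue. x \<in> OmG k \<longrightarrow>
            w x = (1/2) ^ k \<and> (u has_real_derivative (- (2 ^ k))) (at x)) \<and>
        (AE x in lebesgue. x \<in> OmB \<longrightarrow>
            w x = 1 \<and> (u has_real_derivative b_seq N) (at x)) \<and>
        (\<forall>r::real. r > 2 \<longrightarrow>
           (\<forall>a b::real. a < b \<longrightarrow>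
              (let W = (\<lambda>x. if x \<in> {0..1} then w x else 1) in
                (integral {a..b} W / (b - a)) *
                (integral {a..b} (\<lambda>x. W x powr (- 1 / (r - 1))) / (b - a)) powr (r - 1)
                \<le> C r))))"
proof (intro exI[of _ Cfun] allI impI)
  fix N :: nat and \<delta> :: real
  assume asm: "N \<ge> 1 \<and> \<delta> > 0"
  then have N: "N \<ge> 1" and d: "\<delta> > 0" by auto
  define B where "B = \<bar>b_seq N\<bar> + 2 ^ N"
  define M where "M = nat \<lceil>B / \<delta>\<rceil> + 1"
  have M: "M \<ge> 1" unfolding M_def by simp
  have Mpos: "real M > 0" using M by simp
  have MB: "B / real M \<le> \<delta>"
  proof -
    have "B / \<delta> \<le> real M" unfolding M_def by linarith
    then have "B \<le> \<delta> * real M" using d by (simp add: divide_le_eq mult.commute)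
    then show ?thesis using Mpos by (simp add: divide_le_eq mult.commute)
  qed
  let ?S = "NS N M"
  have Sfin: "finite ?S" by (rule NS_finite[OF M])
  have S01: "0 \<in> ?S" "1 \<in> ?S" "?S \<subseteq> {0..1}" unfolding NS_def by auto
  have gap_const: "lvl N M t = lvl N M ((x + y) / 2)"
    if xy: "x \<in> ?S" "y \<in> ?S" "x < y" "{x<..<y} \<inter> ?S = {}" and t: "x < t" "t < y" for x y t
  proof (rule lvl_const[OF M])
    show "0 \<le> x" "y \<le> 1" using xy S01 by auto
    show "\<And>t. x < t \<Longrightarrow> t < y \<Longrightarrow> t \<notin> ?S" using xy by auto
  qed (use t xy in auto)
  have PA: "piecewise_affine_on 0 1 (uu N M)"
    unfolding piecewise_affine_on_def
  proof (intro exI[of _ ?S] conjI ballI impI)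
    fix x y assume x: "x \<in> ?S" and y: "y \<in> ?S" and xy: "x < y \<and> {x<..<y} \<inter> ?S = {}"
    define m where "m = sig N (lvl N M ((x + y) / 2))"
    have xy01: "0 \<le> x" "x \<le> y" "y \<le> 1" using x y xy S01 by auto
    have "\<forall>t\<in>{x..y}. uu N M t = m * t + (uu N M x - m * x)"
    proof
      fix t assume t: "t \<in> {x..y}"
      have "uu N M t = uu N M x + m * (t - x)"
      proof (rule uu_affine[OF M xy01 _ t])
        fix s assume s: "x < s" "s < y"
        have "lvl N M s = lvl N M ((x + y) / 2)"
          by (rule gap_const[OF x y]) (use xy s in auto)
        then show "gg N M s = m" unfolding gg_def m_def by simp
      qed
      then show "uu N M t = m * t + (uu N M x - m * x)" by (simp add: algebra_simps)
    qed
    then show "\<exists>m c. \<forall>t\<in>{x..y}. uu N M t = m * t + c" by blast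
  qed (use Sfin S01 in auto)
  have PC: "piecewise_constant_on 0 1 (ww N M)"
    unfolding piecewise_constant_on_def
  proof (intro exI[of _ ?S] conjI ballI impI)
    fix x y assume x: "x \<in> ?S" and y: "y \<in> ?S" and xy: "x < y \<and> {x<..<y} \<inter> ?S = {}"
    have "\<forall>t\<in>{x<..<y}. ww N M t = (1/2) ^ lvl N M ((x + y) / 2)"
    proof
      fix t assume "t \<in> {x<..<y}"
      then have "lvl N M t = lvl N M ((x + y) / 2)"
        by (intro gap_const[OF x y]) (use xy in auto)
      then show "ww N M t = (1/2) ^ lvl N M ((x + y) / 2)" unfolding ww_def by simp
    qed
    then show "\<exists>c. \<forall>t\<in>{x<..<y}. ww N M t = c" by blast
  qed (use Sfin S01 in auto)
  have OGsub: "OG N M k \<subseteq> {0<..<1}" for k unfolding OG_def by auto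
  have OBsub: "OB N M \<subseteq> {0<..<1}" unfolding OB_def by auto
  have AEG: "AE x in lebesgue. x \<in> OG N M k \<longrightarrow>
            ww N M x = (1/2) ^ k \<and> (uu N M has_real_derivative (- (2 ^ k))) (at x)" if k: "k \<in> {1..N}" for k
  proof (rule AE_I2, intro impI)
    have lv: "lvl N M t = k" if "t \<in> OG N M k" for t
      using that k unfolding OG_def lvl_def by (intro kap_eq) auto
    fix x assume x: "x \<in> OG N M k"
    have "ww N M x = (1/2) ^ k" unfolding ww_def using lv[OF x] by simp
    moreover have "(uu N M has_real_derivative (- (2 ^ k))) (at x)"
    proof (rule uu_deriv_local[OF M OG_open OGsub x])
      fix t assume "t \<in> OG N M k"
      then show "gg N M t = - (2 ^ k)" unfolding gg_def sig_def using lv k by auto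
    qed
    ultimately show "ww N M x = (1/2) ^ k \<and> (uu N M has_real_derivative (- (2 ^ k))) (at x)" by simp
  qed
  have AEB: "AE x in lebesgue. x \<in> OB N M \<longrightarrow>
            ww N M x = 1 \<and> (uu N M has_real_derivative b_seq N) (at x)"
  proof (rule AE_I2, intro impI)
    have lv: "lvl N M t = 0" if "t \<in> OB N M" for t
      using that unfolding OB_def lvl_def by (intro kap_zero) auto
    fix x assume x: "x \<in> OB N M"
    have "ww N M x = 1" unfolding ww_def using lv[OF x] by simp
    moreover have "(uu N M has_real_derivative b_seq N) (at x)"
    proof (rule uu_deriv_local[OF M OB_open OBsub x])
      fix t assume "t \<in> OB N M"
      then show "gg N M t = b_seq N" unfolding gg_def sig_def using lv by auto
    qed
    ultimately show "ww N M x = 1 \<and> (uu N M has_real_derivative b_seq N) (at x)" by simp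
  qed
  have AR: "(let W = (\<lambda>x. if x \<in> {0..1} then ww N M x else 1) in
                (integral {a..b} W / (b - a)) *
                (integral {a..b} (\<lambda>x. W x powr (- 1 / (r - 1))) / (b - a)) powr (r - 1)
                \<le> Cfun r)" if r: "r > 2" and ab: "a < b" for r a b
  proof -
    have Weq: "(\<lambda>x. if x \<in> {0..1} then ww N M x else 1) = (\<lambda>x. Wt N M (real M * x))"
    proof
      fix x
      have "x \<in> {0..1} \<longleftrightarrow> real M * x \<in> {0..real M}" using Mpos
        by (auto simp: zero_le_mult_iff mult_le_cancel_left1)
      then show "(if x \<in> {0..1} then ww N M x else 1) = Wt N M (real M * x)"
        unfolding ww_def Wt_def lvl_def by simp
    qed
    have i1: "Wt N M integrable_on {real M * a..real M * b}"
      unfolding Wt_def by (rule Wt_gen_integrable)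
    have Vf: "(\<lambda>y. Wt N M y powr (- 1 / (r - 1))) =
        (\<lambda>y. if y \<in> {0..real M} then ((1/2::real) ^ kap N (rho1 y)) powr (- 1 / (r - 1)) else 1)"
    proof
      fix y
      show "Wt N M y powr (- 1 / (r - 1)) =
        (if y \<in> {0..real M} then ((1/2::real) ^ kap N (rho1 y)) powr (- 1 / (r - 1)) else 1)"
      proof (cases "y \<in> {0..real M}")
        case True
        then have "Wt N M y = (1/2::real) ^ kap N (rho1 y)" unfolding Wt_def by (simp only: if_True)
        then show ?thesis using True by (simp only: if_True)
      next
        case False
        then have "Wt N M y = 1" unfolding Wt_def by (simp only: if_False)
        then show ?thesis using False by (simp only: if_False powr_one_eq_one)
      qed
    qed
    have i2: "(\<lambda>y. Wt N M y powr (- 1 / (r - 1))) integrable_on {real M * a..real M * b}"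
      unfolding Vf by (rule Wt_gen_integrable)
    have ab': "real M * a < real M * b" using ab Mpos by simp
    have e1: "integral {a..b} (\<lambda>x. Wt N M (real M * x)) / (b - a) =
              integral {real M * a..real M * b} (Wt N M) / (real M * b - real M * a)"
      by (rule avg_scale[OF Mpos i1 ab])
    have e2: "integral {a..b} (\<lambda>x. Wt N M (real M * x) powr (- 1 / (r - 1))) / (b - a) =
              integral {real M * a..real M * b} (\<lambda>y. Wt N M y powr (- 1 / (r - 1))) / (real M * b - real M * a)"
      by (rule avg_scale[OF Mpos i2 ab])
    show ?thesis
      unfolding Let_def Weq e1 e2 by (rule Ar_core[OF ab' r])
  qed
  have c1: "open (OB N M)" by (rule OB_open)
  have c2: "OB N M \<subseteq> {0..1}" using OBsub by auto
  have c3: "\<forall>k\<in>{1..N}. open (OG N M k) \<and> OG N M k \<subseteq> {0..1}"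
  proof (intro ballI conjI)
    fix k
    show "open (OG N M k)" by (rule OG_open)
    show "OG N M k \<subseteq> {0..1}" using OGsub[of k] by auto
  qed
  have c4: "NS N M \<in> null_sets lebesgue" by (rule NS_null[OF M])
  have c5: "{0..1} = (\<Union>k\<in>{1..N}. OG N M k) \<union> OB N M \<union> NS N M" by (rule cover[OF N])
  have c6: "uu N M 0 = 0" by (rule uu_zero)
  have c7: "uu N M 1 = 0" by (rule uu_one[OF M])
  have c8: "\<forall>x\<in>{0..1}. \<bar>uu N M x\<bar> \<le> \<delta>"
  proof
    fix x :: real assume x: "x \<in> {0..1}"
    have "\<bar>uu N M x\<bar> \<le> B / real M" using uu_small[OF M x, of N] unfolding B_def .
    then show "\<bar>uu N M x\<bar> \<le> \<delta>" using MB by linarith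
  qed
  have c9: "\<forall>x\<in>{0..1}. ww N M x > 0" unfolding ww_def by simp
  have c10: "measure lebesgue (OB N M) = beta_seq N" by (rule measure_OB[OF M N])
  have c11: "\<forall>k\<in>{1..N}. measure lebesgue (OG N M k) = mu_seq k"
  proof
    fix k assume "k \<in> {1..N}" then show "measure lebesgue (OG N M k) = mu_seq k" by (rule measure_OG[OF M])
  qed
  have c12: "\<forall>k\<in>{1..N}. AE x in lebesgue. x \<in> OG N M k \<longrightarrow>
            ww N M x = (1/2) ^ k \<and> (uu N M has_real_derivative (- (2 ^ k))) (at x)"
  proof
    fix k assume "k \<in> {1..N}"
    then show "AE x in lebesgue. x \<in> OG N M k \<longrightarrow>
            ww N M x = (1/2) ^ k \<and> (uu N M has_real_derivative (- (2 ^ k))) (at x)" by (rule AEG)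
  qed
  have c13: "\<forall>r::real. r > 2 \<longrightarrow>
           (\<forall>a b::real. a < b \<longrightarrow>
              (let W = (\<lambda>x. if x \<in> {0..1} then ww N M x else 1) in
                (integral {a..b} W / (b - a)) *
                (integral {a..b} (\<lambda>x. W x powr (- 1 / (r - 1))) / (b - a)) powr (r - 1)
                \<le> Cfun r))"
  proof (intro allI impI)
    fix r a b :: real assume "r > 2" "a < b"
    then show "let W = (\<lambda>x. if x \<in> {0..1} then ww N M x else 1) in
                (integral {a..b} W / (b - a)) *
                (integral {a..b} (\<lambda>x. W x powr (- 1 / (r - 1))) / (b - a)) powr (r - 1)
                \<le> Cfun r" by (rule AR)
  qed
  show "\<exists>OmB OmG Nul u w.
        open OmB \<and> OmB \<subseteq> {0..1} \<and>
        (\<forall>k\<in>{1..N}. open (OmG k) \<and> OmG k \<subseteq> {0..1}) \<and>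
        Nul \<in> null_sets lebesgue \<and>
        {0..1} = (\<Union>k\<in>{1..N}. OmG k) \<union> OmB \<union> Nul \<and>
        piecewise_affine_on 0 1 u \<and> u 0 = 0 \<and> u 1 = 0 \<and>
        (\<forall>x\<in>{0..1}. \<bar>u x\<bar> \<le> \<delta>) \<and>
        piecewise_constant_on 0 1 w \<and> (\<forall>x\<in>{0..1}. w x > 0) \<and>
        measure lebesgue OmB = beta_seq N \<and>
        (\<forall>k\<in>{1..N}. measure lebesgue (OmG k) = mu_seq k) \<and>
        (\<forall>k\<in>{1..N}. AE x in lebesgue. x \<in> OmG k \<longrightarrow>
            w x = (1/2) ^ k \<and> (u has_real_derivative (- (2 ^ k))) (at x)) \<and>
        (AE x in lebesgue. x \<in> OmB \<longrightarrow>
            w x = 1 \<and> (u has_real_derivative b_seq N) (at x)) \<and>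
        (\<forall>r::real. r > 2 \<longrightarrow>
           (\<forall>a b::real. a < b \<longrightarrow>
              (let W = (\<lambda>x. if x \<in> {0..1} then w x else 1) in
                (integral {a..b} W / (b - a)) *
                (integral {a..b} (\<lambda>x. W x powr (- 1 / (r - 1))) / (b - a)) powr (r - 1)
                \<le> Cfun r)))"
    by (intro exI[of _ "OB N M"] exI[of _ "OG N M"] exI[of _ "NS N M"] exI[of _ "uu N M"] exI[of _ "ww N M"]
        conjI c1 c2 c3 c4 c5 PA c6 c7 c8 PC c9 c10 c11 c12 AEB c13)
qed


end
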